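(* Let $(G,N,\theta)_{\mathcal H}$ and $(H,M,\varphi)_{\mathcal H}$ be $\mathcal H$-triples with $(G,N,\theta)_{\mathcal H}\ge_c(H,M,\varphi)_{\mathcal H}$. Let $\epsilon:G\to\mathrm{Aut}(N)$ be the homomorphism given by conjugation. Suppose that $N\trianglelefteq\hat G$ for a finite group $\hat G$ and that $\hat\epsilon(\hat G)=\epsilon(G)$, where $\hat\epsilon:\hat G\to\mathrm{Aut}(N)$ is given by conjugation. Let $\hat H$ be a subgroup with $M\,\mathbf C_{\hat G}(N)\subseteq\hat H\le\hat G$ and $\hat\epsilon(\hat H)=\epsilon(H)$. Then $(\hat G,N,\theta)_{\mathcal H}\ge_c(\hat H,M,\varphi)_{\mathcal H}$.
   Context: All groups are finite; $p$ is a fixed prime. $\mathbb Q^{\mathrm{ab}}\subseteq\mathbb C$ is generated by all roots of unity, $\mathcal G=\mathrm{Gal}(\mathbb Q^{\mathrm{ab}}/\mathbb Q)$, $\mathcal H\le\mathcal G$ consists of those $\sigma$ for which there is an integer $f$ with $\sigma(\xi)=\xi^{p^f}$ for all roots of unity $\xi$ of order prime to $p$. For $N\trianglelefteq G$, $\theta\in\mathrm{Irr}(N)$, $g\in G$, $\sigma\in\mathcal G$: $\theta^{g\sigma}(n)=\sigma(\theta(gng^{-1}))$; $A_\theta$ the stabilizer in $A\le G\times\mathcal G$; $\theta^{\mathcal H}$ the $\mathcal H$-orbit; $G_{\theta^{\mathcal H}}=\{g:\theta^g\in\theta^{\mathcal H}\}$. $(G,N,\theta)_{\mathcal H}$ is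 an $\mathcal H$-triple if $N\trianglelefteq G$, $\theta\in\mathrm{Irr}(N)$, $G_{\theta^{\mathcal H}}=G$. Projective representation $\mathcal P$ with factor set $\alpha$: $\mathcal P(x)\mathcal P(y)=\alpha(x,y)\mathcal P(xy)$. For $G$-invariant $\theta$, $\mathcal P$ is associated with $\theta$ if $\mathcal P_N$ affords $\theta$ and $\mathcal P(ng)=\mathcal P(n)\mathcal P(g)$, $\mathcal P(gn)=\mathcal P(g)\mathcal P(n)$. $\mathcal Q\sim\mu\mathcal P$ means $\mathcal Q(x)=\mu(x)M^{-1}\mathcal P(x)M$ for fixed invertible $M$. For $\mathcal P$ associated with $\theta$ on $G_\theta$ with entries in $\mathbb Q^{\mathrm{ab}}$ and $\theta^{x\sigma}=\theta$: $\mathcal P^{x\sigma}(y)=\sigma(\mathcal P(xyx^{-1}))$, and $\mu_{x\sigma}$ is the unique function $G_\theta\to\mathbb C^\times$, constant on $N$-cosets, $\mu_{x\sigma}(1)=1$, with $\mathcal P^{x\sigma}\sim\mu_{x\sigma}\mathcal P$. $(G,N,\theta)_{\mathcal H}\ge_c(H,M,\varphi)_{\mathcal H}$ (both $\mathcal H$-triples, $H\le G$) means: (i) $G=NH$, $N\cap H=M$, $\mathbf C_G(N)\subseteq H$; (ii) $(H\times\mathcal H)_\theta=(H\times\mathcal H)_\varphi$; (iii) there are projective representations $\mathcal P$ of $G_\theta$ associated with $\theta$ and $\mathcal P'$ of $H_\varphi$ associated with $\varphi$, entries in $\mathbb Q^{\mathrm{ab}}$, factor sets with root-of-unity values agreeing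 on $H_\theta\times H_\theta$, and $\mathcal P(c),\mathcal P'(c)$ the same scalar for all $c\in\mathbf C_G(N)$; (iv) $\mu_a=\mu'_a$ on $H_\theta$ for all $a\in(H\times\mathcal H)_\theta$. *)

theory Defs
  imports "Jordan_Normal_Form.Matrix" "HOL-Algebra.Coset"
begin

inductive_set Qab :: "complex set" where
  root: "n > 0 \<Longrightarrow> z ^ n = 1 \<Longrightarrow> z \<in> Qab"
| add: "x \<in> Qab \<Longrightarrow> y \<in> Qab \<Longrightarrow> x + y \<in> Qab"
| mult: "x \<in> Qab \<Longrightarrow> y \<in> Qab \<Longrightarrow> x * y \<in> Qab"
| uminus: "x \<in> Qab \<Longrightarrow> - x \<in> Qab"
| inverse: "x \<in> Qab \<Longrightarrow> inverse x \<in> Qab"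

text \<open>Elements of Gal(Q^ab/Q), represented by functions complex => complex whose
  restriction to Q^ab is a field automorphism of Q^ab (values outside Q^ab are irrelevant).\<close>
definition galQab :: "(complex \<Rightarrow> complex) set" where
  "galQab = {\<sigma>. bij_betw \<sigma> Qab Qab \<and>
     (\<forall>x\<in>Qab. \<forall>y\<in>Qab. \<sigma> (x + y) = \<sigma> x + \<sigma> y \<and> \<sigma> (x * y) = \<sigma> x * \<sigma> y)}"

definition root_of_unity :: "complex \<Rightarrow> bool" where
  "root_of_unity z \<longleftrightarrow> (\<exists>n>0. z ^ n = 1)"

definition p'_root :: "nat \<Rightarrow> complex \<Rightarrow> bool" where
  "p'_root p \<xi> \<longleftrightarrow> (\<exists>n>0. \<xi> ^ n = 1 \<and> coprime n p)"

text \<open>The subgroup calH: sigma acts on p'-roots of unity as xi |-> xi^(p^f) for an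
  integer f; for f < 0 this means that (sigma xi)^(p^(-f)) = xi.\<close>
definition calH :: "nat \<Rightarrow> (complex \<Rightarrow> complex) set" where
  "calH p = {\<sigma> \<in> galQab. \<exists>f::int. \<forall>\<xi>. p'_root p \<xi> \<longrightarrow>
      (if f \<ge> 0 then \<sigma> \<xi> = \<xi> ^ (p ^ nat f) else (\<sigma> \<xi>) ^ (p ^ nat (- f)) = \<xi>)}"

definition conjg :: "('a, 'b) monoid_scheme \<Rightarrow> 'a \<Rightarrow> 'a \<Rightarrow> 'a" where
  "conjg G g n = g \<otimes>\<^bsub>G\<^esub> n \<otimes>\<^bsub>G\<^esub> inv\<^bsub>G\<^esub> g"

definition centralizer_in :: "('a, 'b) monoid_scheme \<Rightarrow> 'a set \<Rightarrow> 'a set" where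
  "centralizer_in G N = {g \<in> carrier G. \<forall>n\<in>N. g \<otimes>\<^bsub>G\<^esub> n = n \<otimes>\<^bsub>G\<^esub> g}"

text \<open>epsilon(X): the automorphisms of N induced by conjugation by elements of X.\<close>
definition conj_image :: "('a, 'b) monoid_scheme \<Rightarrow> 'a set \<Rightarrow> 'a set \<Rightarrow> ('a \<Rightarrow> 'a) set" where
  "conj_image G N X = (\<lambda>g. restrict (conjg G g) N) ` X"

definition mat_trace :: "complex mat \<Rightarrow> complex" where
  "mat_trace A = (\<Sum>i<dim_row A. A $$ (i, i))"

definition is_rep :: "('a, 'b) monoid_scheme \<Rightarrow> 'a set \<Rightarrow> nat \<Rightarrow> ('a \<Rightarrow> complex mat) \<Rightarrow> bool" where
  "is_rep G N d \<rho> \<longleftrightarrow> (\<forall>x\<in>N. \<rho> x \<in> carrier_mat d d) \<and> \<rho> \<one>\<^bsub>G\<^esub> = 1\<^sub>m d \<and>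
     (\<forall>x\<in>N. \<forall>y\<in>N. \<rho> (x \<otimes>\<^bsub>G\<^esub> y) = \<rho> x * \<rho> y)"

definition invariant_subspace :: "'a set \<Rightarrow> nat \<Rightarrow> ('a \<Rightarrow> complex mat) \<Rightarrow> complex vec set \<Rightarrow> bool" where
  "invariant_subspace N d \<rho> W \<longleftrightarrow> W \<subseteq> carrier_vec d \<and> 0\<^sub>v d \<in> W \<and>
     (\<forall>v\<in>W. \<forall>w\<in>W. v + w \<in> W) \<and> (\<forall>c. \<forall>v\<in>W. c \<cdot>\<^sub>v v \<in> W) \<and>
     (\<forall>x\<in>N. \<forall>v\<in>W. \<rho> x *\<^sub>v v \<in> W)"

definition irreducible_rep :: "('a, 'b) monoid_scheme \<Rightarrow> 'a set \<Rightarrow> nat \<Rightarrow> ('a \<Rightarrow> complex mat) \<Rightarrow> bool" where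
  "irreducible_rep G N d \<rho> \<longleftrightarrow> d > 0 \<and> is_rep G N d \<rho> \<and>
     (\<forall>W. invariant_subspace N d \<rho> W \<longrightarrow> W = {0\<^sub>v d} \<or> W = carrier_vec d)"

text \<open>theta in Irr(N): the character of an irreducible complex representation of N
  (only the values of theta on N matter).\<close>
definition irr_char :: "('a, 'b) monoid_scheme \<Rightarrow> 'a set \<Rightarrow> ('a \<Rightarrow> complex) \<Rightarrow> bool" where
  "irr_char G N \<theta> \<longleftrightarrow> (\<exists>d \<rho>. irreducible_rep G N d \<rho> \<and> (\<forall>n\<in>N. \<theta> n = mat_trace (\<rho> n)))"

text \<open>calH-triple (G,N,theta): N normal in G, theta in Irr(N), G_{theta^calH} = G.\<close>
definition H_triple :: "nat \<Rightarrow> ('a, 'b) monoid_scheme \<Rightarrow> 'a set \<Rightarrow> ('a \<Rightarrow> complex) \<Rightarrow> bool" where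
  "H_triple p G N \<theta> \<longleftrightarrow> N \<lhd> G \<and> irr_char G N \<theta> \<and>
     (\<forall>g\<in>carrier G. \<exists>\<sigma>\<in>calH p. \<forall>n\<in>N. \<theta> (conjg G g n) = \<sigma> (\<theta> n))"

definition stab :: "('a, 'b) monoid_scheme \<Rightarrow> 'a set \<Rightarrow> ('a \<Rightarrow> complex) \<Rightarrow> 'a set" where
  "stab G N \<theta> = {g \<in> carrier G. \<forall>n\<in>N. \<theta> (conjg G g n) = \<theta> n}"

text \<open>(H x calH)_theta, where theta^{h sigma}(n) = sigma(theta(h n h^-1)).\<close>
definition stab_pairs :: "nat \<Rightarrow> 'a set \<Rightarrow> ('a, 'b) monoid_scheme \<Rightarrow> 'a set \<Rightarrow> ('a \<Rightarrow> complex)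
    \<Rightarrow> ('a \<times> (complex \<Rightarrow> complex)) set" where
  "stab_pairs p H G N \<theta> = {(h, \<sigma>). h \<in> H \<and> \<sigma> \<in> calH p \<and> (\<forall>n\<in>N. \<sigma> (\<theta> (conjg G h n)) = \<theta> n)}"

definition assoc_proj :: "('a, 'b) monoid_scheme \<Rightarrow> 'a set \<Rightarrow> ('a \<Rightarrow> complex) \<Rightarrow> nat
    \<Rightarrow> ('a \<Rightarrow> complex mat) \<Rightarrow> ('a \<Rightarrow> 'a \<Rightarrow> complex) \<Rightarrow> bool" where
  "assoc_proj G N \<theta> d P \<alpha> \<longleftrightarrow>
     (\<forall>x\<in>stab G N \<theta>. P x \<in> carrier_mat d d \<and> invertible_mat (P x) \<and>
        (\<forall>i<d. \<forall>j<d. P x $$ (i, j) \<in> Qab)) \<and>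
     (\<forall>x\<in>stab G N \<theta>. \<forall>y\<in>stab G N \<theta>. \<alpha> x y \<noteq> 0 \<and> P x * P y = \<alpha> x y \<cdot>\<^sub>m P (x \<otimes>\<^bsub>G\<^esub> y)) \<and>
     is_rep G N d P \<and> (\<forall>n\<in>N. mat_trace (P n) = \<theta> n) \<and>
     (\<forall>n\<in>N. \<forall>g\<in>stab G N \<theta>. P (n \<otimes>\<^bsub>G\<^esub> g) = P n * P g \<and> P (g \<otimes>\<^bsub>G\<^esub> n) = P g * P n)"

text \<open>mu is the function mu_{x sigma}: defined on G_theta, nonzero, constant on N-cosets,
  mu(1) = 1, and P^{x sigma} ~ mu P.\<close>
definition is_mu :: "('a, 'b) monoid_scheme \<Rightarrow> 'a set \<Rightarrow> ('a \<Rightarrow> complex) \<Rightarrow> nat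
    \<Rightarrow> ('a \<Rightarrow> complex mat) \<Rightarrow> 'a \<Rightarrow> (complex \<Rightarrow> complex) \<Rightarrow> ('a \<Rightarrow> complex) \<Rightarrow> bool" where
  "is_mu G N \<theta> d P x \<sigma> \<mu> \<longleftrightarrow>
     (\<forall>y\<in>stab G N \<theta>. \<mu> y \<noteq> 0) \<and>
     (\<forall>y\<in>stab G N \<theta>. \<forall>n\<in>N. \<mu> (n \<otimes>\<^bsub>G\<^esub> y) = \<mu> y) \<and>
     \<mu> \<one>\<^bsub>G\<^esub> = 1 \<and>
     (\<exists>A B. A \<in> carrier_mat d d \<and> B \<in> carrier_mat d d \<and> A * B = 1\<^sub>m d \<and> B * A = 1\<^sub>m d \<and>
        (\<forall>y\<in>stab G N \<theta>. map_mat \<sigma> (P (conjg G x y)) = \<mu> y \<cdot>\<^sub>m (B * P y * A)))"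

definition geq_c :: "nat \<Rightarrow> ('a, 'b) monoid_scheme \<Rightarrow> 'a set \<Rightarrow> ('a \<Rightarrow> complex)
    \<Rightarrow> 'a set \<Rightarrow> 'a set \<Rightarrow> ('a \<Rightarrow> complex) \<Rightarrow> bool" where
  "geq_c p G N \<theta> H M \<phi> \<longleftrightarrow>
     H_triple p G N \<theta> \<and> subgroup H G \<and> H_triple p (G\<lparr>carrier := H\<rparr>) M \<phi> \<and>
     N <#>\<^bsub>G\<^esub> H = carrier G \<and> N \<inter> H = M \<and> centralizer_in G N \<subseteq> H \<and>
     stab_pairs p H G N \<theta> = stab_pairs p H G M \<phi> \<and>
     (\<exists>d P \<alpha> d' P' \<alpha>'.
        assoc_proj G N \<theta> d P \<alpha> \<and> assoc_proj (G\<lparr>carrier := H\<rparr>) M \<phi> d' P' \<alpha>' \<and>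
        (\<forall>x\<in>stab G N \<theta>. \<forall>y\<in>stab G N \<theta>. root_of_unity (\<alpha> x y)) \<and>
        (\<forall>x\<in>stab (G\<lparr>carrier := H\<rparr>) M \<phi>. \<forall>y\<in>stab (G\<lparr>carrier := H\<rparr>) M \<phi>. root_of_unity (\<alpha>' x y)) \<and>
        (\<forall>x\<in>H \<inter> stab G N \<theta>. \<forall>y\<in>H \<inter> stab G N \<theta>. \<alpha> x y = \<alpha>' x y) \<and>
        (\<forall>c\<in>centralizer_in G N. \<exists>\<zeta>. P c = \<zeta> \<cdot>\<^sub>m 1\<^sub>m d \<and> P' c = \<zeta> \<cdot>\<^sub>m 1\<^sub>m d') \<and>
        (\<forall>(x, \<sigma>)\<in>stab_pairs p H G N \<theta>. \<forall>\<mu> \<mu>'.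
            is_mu G N \<theta> d P x \<sigma> \<mu> \<longrightarrow> is_mu (G\<lparr>carrier := H\<rparr>) M \<phi> d' P' x \<sigma> \<mu>' \<longrightarrow>
            (\<forall>y\<in>H \<inter> stab G N \<theta>. \<mu> y = \<mu>' y)))"

end

theory Submission imports Defs "HOL-Algebra.Multiplicative_Group" begin

section \<open>Q^ab and Galois facts\<close>

lemma Qab_one: "1 \<in> Qab" by (rule Qab.root[of 1]) auto
lemma Qab_zero: "0 \<in> Qab" using Qab.add[OF Qab_one Qab.uminus[OF Qab_one]] by simp
lemma Qab_diff: "x \<in> Qab \<Longrightarrow> y \<in> Qab \<Longrightarrow> x - y \<in> Qab"
  using Qab.add[OF _ Qab.uminus] by (metis diff_conv_add_uminus)
lemma Qab_div: "x \<in> Qab \<Longrightarrow> y \<in> Qab \<Longrightarrow> x / y \<in> Qab"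
  by (simp add: Qab.inverse Qab.mult divide_inverse)
lemma root_Qab: "root_of_unity z \<Longrightarrow> z \<in> Qab"
  unfolding root_of_unity_def using Qab.root by blast
lemma Qab_sum: "finite A \<Longrightarrow> (\<forall>i\<in>A. f i \<in> Qab) \<Longrightarrow> sum f A \<in> Qab"
  by (induction A rule: finite_induct) (auto intro: Qab_zero Qab.add)

lemma root_mult: "root_of_unity a \<Longrightarrow> root_of_unity b \<Longrightarrow> root_of_unity (a * b)"
  unfolding root_of_unity_def
proof (elim exE conjE)
  fix n m assume "n > (0::nat)" "a ^ n = 1" "m > (0::nat)" "b ^ m = 1"
  then show "\<exists>k>0. (a * b) ^ k = 1"
  proof (intro exI[of _ "n*m"] conjI)
    have "(a*b)^(n*m) = (a^n)^m * (b^m)^n"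
      by (simp add: power_mult_distrib flip: power_mult) (simp add: mult.commute)
    then show "(a * b) ^ (n * m) = 1" using \<open>a^n=1\<close> \<open>b^m=1\<close> by simp
  qed (use \<open>n>0\<close> \<open>m>0\<close> in simp)
qed

lemma root_inverse: "root_of_unity a \<Longrightarrow> root_of_unity (inverse a)"
  unfolding root_of_unity_def by (metis power_inverse inverse_1)

lemma root_div: "root_of_unity a \<Longrightarrow> root_of_unity b \<Longrightarrow> root_of_unity (a / b)"
  by (simp add: divide_inverse root_mult root_inverse)

lemma root_nz: "root_of_unity a \<Longrightarrow> a \<noteq> 0"
  unfolding root_of_unity_def by (metis power_0_left zero_neq_one less_not_refl)

lemma root_pow: "n > 0 \<Longrightarrow> root_of_unity (a ^ n) \<Longrightarrow> root_of_unity a"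
  unfolding root_of_unity_def by (metis nat_0_less_mult_iff power_mult)

definition QabM :: "nat \<Rightarrow> complex mat \<Rightarrow> bool" where
  "QabM d A \<longleftrightarrow> A \<in> carrier_mat d d \<and> (\<forall>i<d. \<forall>j<d. A $$ (i, j) \<in> Qab)"

context
  fixes \<sigma> assumes sg: "\<sigma> \<in> galQab"
begin

lemma gal_add: "x \<in> Qab \<Longrightarrow> y \<in> Qab \<Longrightarrow> \<sigma> (x + y) = \<sigma> x + \<sigma> y"
  using sg unfolding galQab_def by blast
lemma gal_mult: "x \<in> Qab \<Longrightarrow> y \<in> Qab \<Longrightarrow> \<sigma> (x * y) = \<sigma> x * \<sigma> y"
  using sg unfolding galQab_def by blast
lemma gal_in: "x \<in> Qab \<Longrightarrow> \<sigma> x \<in> Qab"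
  using sg unfolding galQab_def bij_betw_def by blast
lemma gal_inj: "x \<in> Qab \<Longrightarrow> y \<in> Qab \<Longrightarrow> \<sigma> x = \<sigma> y \<Longrightarrow> x = y"
  using sg unfolding galQab_def bij_betw_def inj_on_def by blast
lemma gal_zero: "\<sigma> 0 = 0"
  using gal_add[OF Qab_zero Qab_zero] by simp
lemma gal_nz: "x \<in> Qab \<Longrightarrow> x \<noteq> 0 \<Longrightarrow> \<sigma> x \<noteq> 0"
  using gal_inj[OF _ Qab_zero] gal_zero by metis
lemma gal_one: "\<sigma> 1 = 1"
proof -
  have "\<sigma> 1 = \<sigma> 1 * \<sigma> 1" using gal_mult[OF Qab_one Qab_one] by simp
  moreover have "\<sigma> 1 \<noteq> 0" using gal_nz[OF Qab_one] by simp
  ultimately show ?thesis by (metis mult_cancel_left2)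
qed
lemma gal_sum: "finite A \<Longrightarrow> (\<forall>i\<in>A. f i \<in> Qab) \<Longrightarrow> \<sigma> (sum f A) = (\<Sum>i\<in>A. \<sigma> (f i))"
proof (induction A rule: finite_induct)
  case empty then show ?case by (simp add: gal_zero)
next
  case (insert a A) then show ?case by (simp add: gal_add Qab_sum)
qed


lemma QabM_mult: "QabM d A \<Longrightarrow> QabM d B \<Longrightarrow> QabM d (A * B)"
  unfolding QabM_def
  by (auto simp: scalar_prod_def intro!: Qab_sum Qab.mult)

lemma map_mult: "QabM d A \<Longrightarrow> QabM d B \<Longrightarrow> map_mat \<sigma> (A * B) = map_mat \<sigma> A * map_mat \<sigma> B"
  unfolding QabM_def
  by (intro eq_matI) (auto simp: scalar_prod_def gal_sum gal_mult intro!: Qab.mult sum.cong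
      trans[OF gal_sum])

lemma map_smult: "k \<in> Qab \<Longrightarrow> QabM d A \<Longrightarrow> map_mat \<sigma> (k \<cdot>\<^sub>m A) = \<sigma> k \<cdot>\<^sub>m map_mat \<sigma> A"
  unfolding QabM_def by (intro eq_matI) (auto simp: gal_mult)

lemma map_one: "map_mat \<sigma> (1\<^sub>m d) = 1\<^sub>m d"
  by (intro eq_matI) (auto simp: gal_one gal_zero)

end

lemma smult_cancel:
  fixes X :: "complex mat"
  assumes "X \<in> carrier_mat d d" "i < d" "j < d" "X $$ (i,j) \<noteq> 0" "k \<cdot>\<^sub>m X = k' \<cdot>\<^sub>m X"
  shows "k = k'"
proof -
  have "(k \<cdot>\<^sub>m X) $$ (i,j) = (k' \<cdot>\<^sub>m X) $$ (i,j)" using assms(5) by simp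
  then have "k * X $$ (i,j) = k' * X $$ (i,j)" using assms(1-3) by (metis carrier_matD index_smult_mat(1))
  then show ?thesis using assms(4) by simp
qed

lemma mat_trace_comm:
  fixes A B :: "complex mat"
  assumes "A \<in> carrier_mat d d" "B \<in> carrier_mat d d"
  shows "mat_trace (A * B) = mat_trace (B * A)"
proof -
  have "mat_trace (A * B) = (\<Sum>i<d. \<Sum>k<d. A $$ (i,k) * B $$ (k,i))"
    using assms unfolding mat_trace_def by (intro sum.cong) (auto simp: scalar_prod_def atLeast0LessThan)
  also have "\<dots> = (\<Sum>k<d. \<Sum>i<d. B $$ (k,i) * A $$ (i,k))"
    by (subst sum.swap) (simp add: mult.commute)
  also have "\<dots> = mat_trace (B * A)"
    using assms unfolding mat_trace_def by (intro sum.cong) (auto simp: scalar_prod_def atLeast0LessThan)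
  finally show ?thesis .
qed

lemma mat_trace_one: "mat_trace (1\<^sub>m d) = of_nat d"
  by (simp add: mat_trace_def)

lemma invertible_nz:
  fixes X :: "complex mat"
  assumes "invertible_mat X" "X \<in> carrier_mat d d" "d > 0"
  shows "\<exists>i<d. \<exists>j<d. X $$ (i,j) \<noteq> 0"
proof (rule ccontr)
  assume "\<not> ?thesis"
  then have X0: "X = 0\<^sub>m d d" using assms(2) by (intro eq_matI) auto
  obtain Y where Y: "X * Y = 1\<^sub>m (dim_row X)" and Y2: "Y * X = 1\<^sub>m (dim_row Y)"
    using assms(1) unfolding invertible_mat_def inverts_mat_def by blast
  have dc: "dim_col Y = d" using arg_cong[OF Y, of dim_col] X0 by simp
  have "dim_row Y = d" using arg_cong[OF Y2, of dim_col] X0 by simp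
  then have "(X * Y) $$ (0,0) = 0" using X0 assms(3) dc by (simp add: scalar_prod_def)
  moreover have "(1\<^sub>m (dim_row X) :: complex mat) $$ (0,0) = 1" using X0 assms(3) by simp
  ultimately show False using Y by simp
qed

lemma smult_cancel_inv:
  fixes X :: "complex mat"
  assumes "invertible_mat X" "X \<in> carrier_mat d d" "d > 0" "k \<cdot>\<^sub>m X = k' \<cdot>\<^sub>m X"
  shows "k = k'"
  using invertible_nz[OF assms(1-3)] smult_cancel[OF assms(2) _ _ _ assms(4)] by blast

context group begin

lemma conjg_closed[simp]: "g \<in> carrier G \<Longrightarrow> n \<in> carrier G \<Longrightarrow> conjg G g n \<in> carrier G"
  by (simp add: conjg_def)

lemma conjg_mult: "a \<in> carrier G \<Longrightarrow> b \<in> carrier G \<Longrightarrow> n \<in> carrier G \<Longrightarrow>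
    conjg G (a \<otimes> b) n = conjg G a (conjg G b n)"
  by (simp add: conjg_def m_assoc inv_mult_group)

lemma conjg_one[simp]: "n \<in> carrier G \<Longrightarrow> conjg G \<one> n = n"
  by (simp add: conjg_def)

lemma conjg_of_one[simp]: "g \<in> carrier G \<Longrightarrow> conjg G g \<one> = \<one>"
  by (simp add: conjg_def)

lemma conjg_inv_cancel[simp]: "a \<in> carrier G \<Longrightarrow> n \<in> carrier G \<Longrightarrow> conjg G (inv a) (conjg G a n) = n"
  by (simp add: conjg_def m_assoc flip: m_assoc[of "inv a" a])

lemma conjg_inv_cancel2[simp]: "a \<in> carrier G \<Longrightarrow> n \<in> carrier G \<Longrightarrow> conjg G a (conjg G (inv a) n) = n"
  by (simp add: conjg_def m_assoc flip: m_assoc[of a "inv a"])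

lemma conjg_hom: "g \<in> carrier G \<Longrightarrow> a \<in> carrier G \<Longrightarrow> b \<in> carrier G \<Longrightarrow>
    conjg G g (a \<otimes> b) = conjg G g a \<otimes> conjg G g b"
  by (simp add: conjg_def m_assoc flip: m_assoc[of "inv g" g])

lemma conjg_conjg: "a \<in> carrier G \<Longrightarrow> b \<in> carrier G \<Longrightarrow> n \<in> carrier G \<Longrightarrow>
    conjg G (conjg G a b) n = conjg G a (conjg G b (conjg G (inv a) n))"
  by (simp add: conjg_def m_assoc inv_mult_group)

lemma conjg_mult_left: "g \<in> carrier G \<Longrightarrow> k \<in> carrier G \<Longrightarrow> g \<otimes> k = conjg G g k \<otimes> g"
  by (simp add: conjg_def m_assoc)

lemma centralizer_conjg: "c \<in> centralizer_in G N \<Longrightarrow> n \<in> N \<Longrightarrow> N \<subseteq> carrier G \<Longrightarrow> conjg G c n = n"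
  unfolding centralizer_in_def conjg_def by (auto simp: m_assoc)

lemma conjg_fix_comm: "c \<in> carrier G \<Longrightarrow> n \<in> carrier G \<Longrightarrow> conjg G c n = n \<Longrightarrow> c \<otimes> n = n \<otimes> c"
  unfolding conjg_def by (metis inv_solve_right m_closed inv_closed)

lemma same_action_centralizer:
  assumes "a \<in> carrier G" "b \<in> carrier G" "N \<subseteq> carrier G" "\<forall>n\<in>N. conjg G a n = conjg G b n"
  shows "inv a \<otimes> b \<in> centralizer_in G N"
proof -
  have "conjg G (inv a \<otimes> b) n = n" if "n \<in> N" for n
  proof -
    have n: "n \<in> carrier G" using that assms(3) by blast
    have "conjg G (inv a \<otimes> b) n = conjg G (inv a) (conjg G b n)" using assms n by (simp add: conjg_mult)
    also have "\<dots> = conjg G (inv a) (conjg G a n)" using assms(4) that by simp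
    finally show ?thesis using assms n by simp
  qed
  then show ?thesis using assms unfolding centralizer_in_def
    by (auto intro!: conjg_fix_comm)
qed

lemma centralizer_sub: "centralizer_in G N \<subseteq> carrier G"
  by (auto simp: centralizer_in_def)

lemma centralizer_one: "\<one> \<in> centralizer_in G N" if "N \<subseteq> carrier G"
  using that by (auto simp: centralizer_in_def)

lemma centralizer_mult: "a \<in> centralizer_in G N \<Longrightarrow> b \<in> centralizer_in G N \<Longrightarrow> N \<subseteq> carrier G \<Longrightarrow>
   a \<otimes> b \<in> centralizer_in G N"
  unfolding centralizer_in_def by (auto simp: m_assoc) (metis m_assoc subsetD)

lemma centralizer_pow: "a \<in> centralizer_in G N \<Longrightarrow> N \<subseteq> carrier G \<Longrightarrow> a [^] (j::nat) \<in> centralizer_in G N"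
  by (induction j) (auto intro: centralizer_mult centralizer_one)

end

lemma shared_one:
  assumes "group G" "group Gh" "subgroup N G" "subgroup N Gh"
    "\<forall>a\<in>N. \<forall>b\<in>N. a \<otimes>\<^bsub>Gh\<^esub> b = a \<otimes>\<^bsub>G\<^esub> b"
  shows "\<one>\<^bsub>Gh\<^esub> = \<one>\<^bsub>G\<^esub>"
proof -
  interpret g: group G by fact
  interpret h: group Gh by fact
  have 1: "\<one>\<^bsub>G\<^esub> \<in> N" using assms(3) subgroup.one_closed by blast
  have c: "\<one>\<^bsub>G\<^esub> \<in> carrier Gh" using 1 assms(4) subgroup.subset by blast
  have "\<one>\<^bsub>G\<^esub> \<otimes>\<^bsub>Gh\<^esub> \<one>\<^bsub>G\<^esub> = \<one>\<^bsub>G\<^esub> \<otimes>\<^bsub>G\<^esub> \<one>\<^bsub>G\<^esub>" using assms(5) 1 by blast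
  also have "\<dots> = \<one>\<^bsub>G\<^esub>" by (rule g.l_one[OF g.one_closed])
  finally show ?thesis using h.l_cancel_one[OF c c] by metis
qed

lemma shared_inv:
  assumes "group G" "group Gh" "subgroup N G" "subgroup N Gh"
    "\<forall>a\<in>N. \<forall>b\<in>N. a \<otimes>\<^bsub>Gh\<^esub> b = a \<otimes>\<^bsub>G\<^esub> b" "n \<in> N"
  shows "inv\<^bsub>Gh\<^esub> n = inv\<^bsub>G\<^esub> n"
proof -
  interpret g: group G by fact
  interpret h: group Gh by fact
  have i: "inv\<^bsub>G\<^esub> n \<in> N" using subgroup.m_inv_closed[OF assms(3,6)] .
  have nG: "n \<in> carrier G" using subgroup.mem_carrier[OF assms(3,6)] .
  have "inv\<^bsub>G\<^esub> n \<otimes>\<^bsub>Gh\<^esub> n = inv\<^bsub>G\<^esub> n \<otimes>\<^bsub>G\<^esub> n"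
    using assms(5)[rule_format, OF i assms(6)] .
  also have "\<dots> = \<one>\<^bsub>G\<^esub>" by (rule g.l_inv[OF nG])
  also have "\<dots> = \<one>\<^bsub>Gh\<^esub>" using shared_one[OF assms(1-5)] by (rule sym)
  finally have "inv\<^bsub>G\<^esub> n \<otimes>\<^bsub>Gh\<^esub> n = \<one>\<^bsub>Gh\<^esub>" .
  moreover have "n \<in> carrier Gh" "inv\<^bsub>G\<^esub> n \<in> carrier Gh"
    using subgroup.mem_carrier[OF assms(4,6)] subgroup.mem_carrier[OF assms(4) i] by auto
  ultimately show ?thesis by (intro h.inv_equality)
qed

lemma shared_conjg:
  assumes "group G" "group Gh" "subgroup N G" "subgroup N Gh"
    "\<forall>a\<in>N. \<forall>b\<in>N. a \<otimes>\<^bsub>Gh\<^esub> b = a \<otimes>\<^bsub>G\<^esub> b" "a \<in> N" "b \<in> N"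
  shows "conjg Gh a b = conjg G a b"
proof -
  have i: "inv\<^bsub>G\<^esub> a \<in> N" and ab: "a \<otimes>\<^bsub>G\<^esub> b \<in> N"
    using subgroup.m_inv_closed[OF assms(3,6)] subgroup.m_closed[OF assms(3,6,7)] by auto
  have "conjg Gh a b = (a \<otimes>\<^bsub>G\<^esub> b) \<otimes>\<^bsub>Gh\<^esub> inv\<^bsub>G\<^esub> a"
    unfolding conjg_def using shared_inv[OF assms(1-6)] assms(5) assms(6,7) by simp
  also have "\<dots> = conjg G a b" unfolding conjg_def using assms(5)[rule_format, OF ab i] .
  finally show ?thesis .
qed


lemma smult_smult_mat: "a \<cdot>\<^sub>m (b \<cdot>\<^sub>m (A :: complex mat)) = (a * b) \<cdot>\<^sub>m A"
  by (intro eq_matI) auto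

lemma one_smult_mat': "1 \<cdot>\<^sub>m (A :: complex mat) = A"
  by (intro eq_matI) auto

lemma smult_solve: "(k::complex) \<noteq> 0 \<Longrightarrow> k \<cdot>\<^sub>m X = Y \<Longrightarrow> X = (1/k) \<cdot>\<^sub>m Y"
  by (auto simp: smult_smult_mat one_smult_mat')

lemma sandwich_smult:
  fixes A B M :: "complex mat"
  assumes "A \<in> carrier_mat d d" "B \<in> carrier_mat d d" "M \<in> carrier_mat d d"
  shows "B * (k \<cdot>\<^sub>m M) * A = k \<cdot>\<^sub>m (B * M * A)"
proof -
  have "B * (k \<cdot>\<^sub>m M) = k \<cdot>\<^sub>m (B * M)" using mult_smult_distrib assms by blast
  moreover have "(k \<cdot>\<^sub>m (B * M)) * A = k \<cdot>\<^sub>m (B * M * A)"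
    using mult_smult_assoc_mat[of "B * M" d d A d] assms by simp
  ultimately show ?thesis by simp
qed

lemma sandwich_mult:
  fixes A B M1 M2 :: "complex mat"
  assumes "A \<in> carrier_mat d d" "B \<in> carrier_mat d d" "M1 \<in> carrier_mat d d" "M2 \<in> carrier_mat d d"
    "A * B = 1\<^sub>m d"
  shows "(B * M1 * A) * (B * M2 * A) = B * (M1 * M2) * A"
proof -
  have "(B * M1 * A) * (B * M2 * A) = B * M1 * (A * B) * M2 * A"
    using assms(1-4) by (simp add: assoc_mult_mat[of _ d d _ d _ d])
  also have "\<dots> = B * (M1 * M2) * A" using assms by (simp add: assoc_mult_mat[of _ d d _ d _ d])
  finally show ?thesis .
qed

lemma unsandwich:
  fixes A B M :: "complex mat"
  assumes "A \<in> carrier_mat d d" "B \<in> carrier_mat d d" "M \<in> carrier_mat d d" "A * B = 1\<^sub>m d"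
  shows "A * (B * M * A) * B = M"
proof -
  have "A * (B * M * A) * B = (A * B) * M * (A * B)"
    using assms(1-3) by (simp add: assoc_mult_mat[of _ d d _ d _ d])
  then show ?thesis using assms by simp
qed

lemma sandwich_one:
  fixes A B :: "complex mat"
  assumes "A \<in> carrier_mat d d" "B \<in> carrier_mat d d" "B * A = 1\<^sub>m d"
  shows "B * 1\<^sub>m d * A = 1\<^sub>m d"
  using assms by simp

section \<open>Generic transfer of projective representations\<close>

locale xfer = g: group G + h: group Gh for G Gh :: "'a monoid" +
  fixes K :: "'a set" and \<theta> :: "'a \<Rightarrow> complex" and d :: nat
    and P :: "'a \<Rightarrow> complex mat" and \<alpha> :: "'a \<Rightarrow> 'a \<Rightarrow> complex"
    and \<tau> :: "'a \<Rightarrow> 'a" and Z :: "'a set" and \<zeta> :: "'a \<Rightarrow> complex"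
  assumes KG: "K \<lhd> G" and KH: "K \<lhd> Gh"
    and mult_eq: "\<forall>a\<in>K. \<forall>b\<in>K. a \<otimes>\<^bsub>Gh\<^esub> b = a \<otimes>\<^bsub>G\<^esub> b"
    and AP: "assoc_proj G K \<theta> d P \<alpha>"
    and roots: "\<forall>x\<in>stab G K \<theta>. \<forall>y\<in>stab G K \<theta>. root_of_unity (\<alpha> x y)"
    and dpos: "d > 0"
    and tau_car: "\<And>g. g \<in> carrier Gh \<Longrightarrow> \<tau> g \<in> carrier G"
    and tau_conj: "\<And>g k. g \<in> carrier Gh \<Longrightarrow> k \<in> K \<Longrightarrow> conjg G (\<tau> g) k = conjg Gh g k"
    and tau_left: "\<And>g k. k \<in> K \<Longrightarrow> g \<in> carrier Gh \<Longrightarrow> \<tau> (k \<otimes>\<^bsub>Gh\<^esub> g) = k \<otimes>\<^bsub>G\<^esub> \<tau> g"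
    and tau_one: "\<tau> \<one>\<^bsub>Gh\<^esub> = \<one>\<^bsub>G\<^esub>"
    and Z_sub: "Z \<subseteq> carrier G"
    and Z_one: "\<one>\<^bsub>G\<^esub> \<in> Z"
    and Z_triv: "\<And>c k. c \<in> Z \<Longrightarrow> k \<in> K \<Longrightarrow> conjg G c k = k"
    and Z_P: "\<And>c. c \<in> Z \<Longrightarrow> P c = \<zeta> c \<cdot>\<^sub>m 1\<^sub>m d \<and> root_of_unity (\<zeta> c)"
    and Z1: "\<And>x y. x \<in> carrier Gh \<Longrightarrow> y \<in> carrier Gh \<Longrightarrow>
       inv\<^bsub>G\<^esub> (\<tau> x \<otimes>\<^bsub>G\<^esub> \<tau> y) \<otimes>\<^bsub>G\<^esub> \<tau> (x \<otimes>\<^bsub>Gh\<^esub> y) \<in> Z"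
    and Z2: "\<And>y. y \<in> carrier G \<Longrightarrow> \<exists>yh\<in>carrier Gh. inv\<^bsub>G\<^esub> y \<otimes>\<^bsub>G\<^esub> \<tau> yh \<in> Z"
    and Z3: "\<And>x y yh. x \<in> carrier Gh \<Longrightarrow> y \<in> carrier G \<Longrightarrow> yh \<in> carrier Gh \<Longrightarrow>
       inv\<^bsub>G\<^esub> y \<otimes>\<^bsub>G\<^esub> \<tau> yh \<in> Z \<Longrightarrow>
       inv\<^bsub>G\<^esub> (conjg G (\<tau> x) y) \<otimes>\<^bsub>G\<^esub> \<tau> (conjg Gh x yh) \<in> Z"
begin

abbreviation "S \<equiv> stab G K \<theta>"
abbreviation "Sh \<equiv> stab Gh K \<theta>"

lemma subG: "subgroup K G" using KG by (rule normal_imp_subgroup)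
lemma subH: "subgroup K Gh" using KH by (rule normal_imp_subgroup)
lemma K_G: "k \<in> K \<Longrightarrow> k \<in> carrier G" using subgroup.mem_carrier[OF subG] .
lemma K_H: "k \<in> K \<Longrightarrow> k \<in> carrier Gh" using subgroup.mem_carrier[OF subH] .
lemma one_eq: "\<one>\<^bsub>Gh\<^esub> = \<one>\<^bsub>G\<^esub>"
  using shared_one[OF g.group_axioms h.group_axioms subG subH mult_eq] .
lemma inv_eq: "k \<in> K \<Longrightarrow> inv\<^bsub>Gh\<^esub> k = inv\<^bsub>G\<^esub> k"
  using shared_inv[OF g.group_axioms h.group_axioms subG subH mult_eq] .
lemma conj_eq: "a \<in> K \<Longrightarrow> b \<in> K \<Longrightarrow> conjg Gh a b = conjg G a b"
  using shared_conjg[OF g.group_axioms h.group_axioms subG subH mult_eq] .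
lemma mult_eq': "a \<in> K \<Longrightarrow> b \<in> K \<Longrightarrow> a \<otimes>\<^bsub>Gh\<^esub> b = a \<otimes>\<^bsub>G\<^esub> b"
  using mult_eq by blast
lemma conjK: "g \<in> carrier G \<Longrightarrow> k \<in> K \<Longrightarrow> conjg G g k \<in> K"
  unfolding conjg_def using normal.inv_op_closed2[OF KG] .
lemma conjKh: "g \<in> carrier Gh \<Longrightarrow> k \<in> K \<Longrightarrow> conjg Gh g k \<in> K"
  unfolding conjg_def using normal.inv_op_closed2[OF KH] .
lemma K_mult: "a \<in> K \<Longrightarrow> b \<in> K \<Longrightarrow> a \<otimes>\<^bsub>G\<^esub> b \<in> K"
  using subgroup.m_closed[OF subG] .
lemma K_inv: "a \<in> K \<Longrightarrow> inv\<^bsub>G\<^esub> a \<in> K"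
  using subgroup.m_inv_closed[OF subG] .
lemma K_one: "\<one>\<^bsub>G\<^esub> \<in> K"
  using subgroup.one_closed[OF subG] .

lemma AP_mat: "x \<in> S \<Longrightarrow> P x \<in> carrier_mat d d \<and> invertible_mat (P x) \<and> (\<forall>i<d. \<forall>j<d. P x $$ (i, j) \<in> Qab)"
  using AP unfolding assoc_proj_def by blast
lemma AP_mult: "x \<in> S \<Longrightarrow> y \<in> S \<Longrightarrow> \<alpha> x y \<noteq> 0 \<and> P x * P y = \<alpha> x y \<cdot>\<^sub>m P (x \<otimes>\<^bsub>G\<^esub> y)"
  using AP unfolding assoc_proj_def by blast
lemma AP_rep: "is_rep G K d P"
  using AP unfolding assoc_proj_def by blast
lemma AP_tr: "n \<in> K \<Longrightarrow> mat_trace (P n) = \<theta> n"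
  using AP unfolding assoc_proj_def by blast
lemma AP_left: "n \<in> K \<Longrightarrow> g \<in> S \<Longrightarrow> P (n \<otimes>\<^bsub>G\<^esub> g) = P n * P g"
  using AP unfolding assoc_proj_def by blast
lemma AP_right: "n \<in> K \<Longrightarrow> g \<in> S \<Longrightarrow> P (g \<otimes>\<^bsub>G\<^esub> n) = P g * P n"
  using AP unfolding assoc_proj_def by blast
lemma rep_car: "n \<in> K \<Longrightarrow> P n \<in> carrier_mat d d"
  using AP_rep unfolding is_rep_def by blast
lemma rep_one: "P \<one>\<^bsub>G\<^esub> = 1\<^sub>m d"
  using AP_rep unfolding is_rep_def by blast
lemma rep_mult: "a \<in> K \<Longrightarrow> b \<in> K \<Longrightarrow> P (a \<otimes>\<^bsub>G\<^esub> b) = P a * P b"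
  using AP_rep unfolding is_rep_def by blast

lemma S_car: "x \<in> S \<Longrightarrow> x \<in> carrier G" by (simp add: stab_def)
lemma Sh_car: "x \<in> Sh \<Longrightarrow> x \<in> carrier Gh" by (simp add: stab_def)

lemma S_mult: assumes "x \<in> S" "y \<in> S" shows "x \<otimes>\<^bsub>G\<^esub> y \<in> S"
proof -
  have c: "x \<in> carrier G" "y \<in> carrier G" using assms by (auto simp: stab_def)
  have "\<theta> (conjg G (x \<otimes>\<^bsub>G\<^esub> y) n) = \<theta> n" if "n \<in> K" for n
  proof -
    have "conjg G (x \<otimes>\<^bsub>G\<^esub> y) n = conjg G x (conjg G y n)" using c that K_G by (simp add: g.conjg_mult)
    moreover have "conjg G y n \<in> K" using conjK c that by blast
    ultimately show ?thesis using assms that unfolding stab_def by auto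
  qed
  then show ?thesis using c unfolding stab_def by auto
qed

lemma S_one: "\<one>\<^bsub>G\<^esub> \<in> S"
  unfolding stab_def using K_G by auto

lemma theta_class: assumes "g \<in> K" "n \<in> K" shows "\<theta> (conjg G g n) = \<theta> n"
proof -
  have gi: "inv\<^bsub>G\<^esub> g \<in> K" using K_inv assms by blast
  have "\<theta> (conjg G g n) = mat_trace (P (conjg G g n))" using AP_tr conjK K_G assms by metis
  also have "P (conjg G g n) = P g * P n * P (inv\<^bsub>G\<^esub> g)"
    unfolding conjg_def using rep_mult K_mult assms gi by metis
  also have "mat_trace (P g * P n * P (inv\<^bsub>G\<^esub> g)) = mat_trace (P (inv\<^bsub>G\<^esub> g) * (P g * P n))"
    by (rule mat_trace_comm[of _ d]) (use rep_car assms gi in \<open>auto intro: mult_carrier_mat\<close>)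
  also have "P (inv\<^bsub>G\<^esub> g) * (P g * P n) = P (inv\<^bsub>G\<^esub> g) * P g * P n"
    using rep_car assms gi by (metis assoc_mult_mat)
  also have "P (inv\<^bsub>G\<^esub> g) * P g = 1\<^sub>m d"
    using rep_mult[OF gi assms(1)] K_G assms(1) rep_one by simp
  also have "mat_trace (1\<^sub>m d * P n) = \<theta> n" using AP_tr[OF assms(2)] left_mult_one_mat[OF rep_car[OF assms(2)]] by simp
  finally show ?thesis .
qed

lemma K_S: "k \<in> K \<Longrightarrow> k \<in> S"
  unfolding stab_def using theta_class K_G by auto

lemma Z_S: "c \<in> Z \<Longrightarrow> c \<in> S"
  unfolding stab_def using Z_triv Z_sub by auto

lemma theta_Qab: "k \<in> K \<Longrightarrow> \<theta> k \<in> Qab"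
  using AP_tr[of k] AP_mat[OF K_S, of k] unfolding mat_trace_def
  by (metis (no_types, lifting) Qab_sum carrier_matD(1) finite_lessThan lessThan_iff)

lemma zeta_nz: "c \<in> Z \<Longrightarrow> \<zeta> c \<noteq> 0"
  using Z_P root_nz by blast

lemma tau_stab: "g \<in> carrier Gh \<Longrightarrow> g \<in> Sh \<longleftrightarrow> \<tau> g \<in> S"
  unfolding stab_def using tau_conj tau_car by auto

lemma tau_K: "k \<in> K \<Longrightarrow> \<tau> k = k"
proof -
  assume k: "k \<in> K"
  have "k = k \<otimes>\<^bsub>Gh\<^esub> \<one>\<^bsub>Gh\<^esub>" using K_H[OF k] by simp
  then have "\<tau> k = k \<otimes>\<^bsub>G\<^esub> \<tau> \<one>\<^bsub>Gh\<^esub>" using tau_left[OF k h.one_closed] by simp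
  then show ?thesis using tau_one K_G[OF k] by simp
qed

lemma tau_right: assumes k: "k \<in> K" and g: "g \<in> carrier Gh"
  shows "\<tau> (g \<otimes>\<^bsub>Gh\<^esub> k) = \<tau> g \<otimes>\<^bsub>G\<^esub> k"
proof -
  have "g \<otimes>\<^bsub>Gh\<^esub> k = conjg Gh g k \<otimes>\<^bsub>Gh\<^esub> g" using h.conjg_mult_left g K_H k by blast
  then have "\<tau> (g \<otimes>\<^bsub>Gh\<^esub> k) = conjg Gh g k \<otimes>\<^bsub>G\<^esub> \<tau> g" using tau_left conjKh g k by simp
  also have "\<dots> = conjg G (\<tau> g) k \<otimes>\<^bsub>G\<^esub> \<tau> g" using tau_conj g k by simp
  also have "\<dots> = \<tau> g \<otimes>\<^bsub>G\<^esub> k" using g.conjg_mult_left tau_car g K_G k by metis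
  finally show ?thesis .
qed

definition cz :: "'a \<Rightarrow> 'a \<Rightarrow> 'a" where
  "cz x y = inv\<^bsub>G\<^esub> (\<tau> x \<otimes>\<^bsub>G\<^esub> \<tau> y) \<otimes>\<^bsub>G\<^esub> \<tau> (x \<otimes>\<^bsub>Gh\<^esub> y)"
definition Ph :: "'a \<Rightarrow> complex mat" where "Ph g = P (\<tau> g)"
definition \<alpha>h :: "'a \<Rightarrow> 'a \<Rightarrow> complex" where
  "\<alpha>h x y = \<alpha> (\<tau> x) (\<tau> y) * \<alpha> (\<tau> x \<otimes>\<^bsub>G\<^esub> \<tau> y) (cz x y) / \<zeta> (cz x y)"

lemma tau_mult: "x \<in> carrier Gh \<Longrightarrow> y \<in> carrier Gh \<Longrightarrow>
   \<tau> (x \<otimes>\<^bsub>Gh\<^esub> y) = (\<tau> x \<otimes>\<^bsub>G\<^esub> \<tau> y) \<otimes>\<^bsub>G\<^esub> cz x y"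
  unfolding cz_def using tau_car by (simp add: g.m_assoc[symmetric] g.r_inv)

lemma P_Z: assumes a: "a \<in> S" and c: "c \<in> Z"
  shows "P (a \<otimes>\<^bsub>G\<^esub> c) = (\<zeta> c / \<alpha> a c) \<cdot>\<^sub>m P a"
proof -
  have m: "P a \<in> carrier_mat d d" using AP_mat a by blast
  have "P a * P c = \<zeta> c \<cdot>\<^sub>m (P a * 1\<^sub>m d)" using Z_P[OF c] mult_smult_distrib[OF m one_carrier_mat] by simp
  then have "P a * P c = \<zeta> c \<cdot>\<^sub>m P a" using m by simp
  then have "\<alpha> a c \<cdot>\<^sub>m P (a \<otimes>\<^bsub>G\<^esub> c) = \<zeta> c \<cdot>\<^sub>m P a" using AP_mult[OF a Z_S[OF c]] by simp
  then have "P (a \<otimes>\<^bsub>G\<^esub> c) = (1 / \<alpha> a c) \<cdot>\<^sub>m (\<zeta> c \<cdot>\<^sub>m P a)"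
    using smult_solve AP_mult[OF a Z_S[OF c]] by blast
  then show ?thesis by (simp add: smult_smult_mat)
qed

lemma Ph_mult: assumes x: "x \<in> Sh" and y: "y \<in> Sh"
  shows "Ph x * Ph y = \<alpha>h x y \<cdot>\<^sub>m Ph (x \<otimes>\<^bsub>Gh\<^esub> y)"
proof -
  have xc: "x \<in> carrier Gh" and yc: "y \<in> carrier Gh" using x y Sh_car by auto
  have a: "\<tau> x \<in> S" and b: "\<tau> y \<in> S" using tau_stab x y xc yc by auto
  have ab: "\<tau> x \<otimes>\<^bsub>G\<^esub> \<tau> y \<in> S" using S_mult a b by blast
  have c: "cz x y \<in> Z" unfolding cz_def using Z1 xc yc by blast
  have "Ph (x \<otimes>\<^bsub>Gh\<^esub> y) = (\<zeta> (cz x y) / \<alpha> (\<tau> x \<otimes>\<^bsub>G\<^esub> \<tau> y) (cz x y)) \<cdot>\<^sub>m P (\<tau> x \<otimes>\<^bsub>G\<^esub> \<tau> y)"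
    unfolding Ph_def using tau_mult[OF xc yc] P_Z[OF ab c] by simp
  then have "P (\<tau> x \<otimes>\<^bsub>G\<^esub> \<tau> y) = (\<alpha> (\<tau> x \<otimes>\<^bsub>G\<^esub> \<tau> y) (cz x y) / \<zeta> (cz x y)) \<cdot>\<^sub>m Ph (x \<otimes>\<^bsub>Gh\<^esub> y)"
    using zeta_nz[OF c] AP_mult[OF ab Z_S[OF c]]
    by (simp add: smult_smult_mat one_smult_mat')
  then show ?thesis unfolding Ph_def \<alpha>h_def using AP_mult[OF a b]
    by (simp add: smult_smult_mat)
qed

lemma alphah_root: "x \<in> Sh \<Longrightarrow> y \<in> Sh \<Longrightarrow> root_of_unity (\<alpha>h x y)"
  unfolding \<alpha>h_def
  by (metis Sh_car S_mult Z1 Z_P Z_S cz_def root_div root_mult roots tau_stab)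

lemma Ph_assoc: "assoc_proj Gh K \<theta> d Ph \<alpha>h"
proof -
  have 1: "\<forall>x\<in>Sh. Ph x \<in> carrier_mat d d \<and> invertible_mat (Ph x) \<and> (\<forall>i<d. \<forall>j<d. Ph x $$ (i, j) \<in> Qab)"
  proof
    fix x assume x: "x \<in> Sh"
    then have "\<tau> x \<in> S" using tau_stab Sh_car by blast
    then show "Ph x \<in> carrier_mat d d \<and> invertible_mat (Ph x) \<and> (\<forall>i<d. \<forall>j<d. Ph x $$ (i, j) \<in> Qab)"
      unfolding Ph_def using AP_mat by blast
  qed
  have 2: "\<forall>x\<in>Sh. \<forall>y\<in>Sh. \<alpha>h x y \<noteq> 0 \<and> Ph x * Ph y = \<alpha>h x y \<cdot>\<^sub>m Ph (x \<otimes>\<^bsub>Gh\<^esub> y)"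
    using Ph_mult alphah_root root_nz by blast
  have 3: "is_rep Gh K d Ph" unfolding is_rep_def Ph_def
    using rep_car tau_K tau_one one_eq rep_one rep_mult mult_eq' subgroup.m_closed[OF subH]
    by auto
  have 4: "\<forall>n\<in>K. mat_trace (Ph n) = \<theta> n"
    unfolding Ph_def using tau_K AP_tr by simp
  have 5: "\<forall>n\<in>K. \<forall>g\<in>Sh. Ph (n \<otimes>\<^bsub>Gh\<^esub> g) = Ph n * Ph g \<and> Ph (g \<otimes>\<^bsub>Gh\<^esub> n) = Ph g * Ph n"
  proof (intro ballI)
    fix n g assume n: "n \<in> K" and g: "g \<in> Sh"
    have gc: "g \<in> carrier Gh" using g Sh_car by blast
    have tg: "\<tau> g \<in> S" using tau_stab g gc by blast
    show "Ph (n \<otimes>\<^bsub>Gh\<^esub> g) = Ph n * Ph g \<and> Ph (g \<otimes>\<^bsub>Gh\<^esub> n) = Ph g * Ph n"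
      unfolding Ph_def using tau_left[OF n gc] tau_right[OF n gc] AP_left[OF n tg] AP_right[OF n tg] tau_K[OF n]
      by simp
  qed
  show ?thesis unfolding assoc_proj_def using 1 2 3 4 5 by blast
qed

lemma Ph_eq: "Ph = (\<lambda>g. P (\<tau> g))" by (rule ext) (simp add: Ph_def)
lemma alphah_eq: "\<alpha>h = (\<lambda>x y. \<alpha> (\<tau> x) (\<tau> y) * \<alpha> (\<tau> x \<otimes>\<^bsub>G\<^esub> \<tau> y) (inv\<^bsub>G\<^esub> (\<tau> x \<otimes>\<^bsub>G\<^esub> \<tau> y) \<otimes>\<^bsub>G\<^esub> \<tau> (x \<otimes>\<^bsub>Gh\<^esub> y))
   / \<zeta> (inv\<^bsub>G\<^esub> (\<tau> x \<otimes>\<^bsub>G\<^esub> \<tau> y) \<otimes>\<^bsub>G\<^esub> \<tau> (x \<otimes>\<^bsub>Gh\<^esub> y)))"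
  by (intro ext) (simp add: \<alpha>h_def cz_def)

lemma normalizes:
  assumes sg: "\<sigma> \<in> galQab" and x: "x \<in> carrier G"
    and ht: "\<forall>k\<in>K. \<sigma> (\<theta> (conjg G x k)) = \<theta> k" and y: "y \<in> S"
  shows "conjg G x y \<in> S"
proof -
  have yc: "y \<in> carrier G" using y S_car by blast
  have "\<theta> (conjg G (conjg G x y) n) = \<theta> n" if n: "n \<in> K" for n
  proof -
    define m0 where "m0 = conjg G (inv\<^bsub>G\<^esub> x) n"
    have m0: "m0 \<in> K" unfolding m0_def using conjK n x by blast
    have xm: "conjg G x m0 = n" unfolding m0_def using x K_G[OF n] by simp
    have ym: "conjg G y m0 \<in> K" using conjK yc m0 by blast
    have e1: "conjg G (conjg G x y) n = conjg G x (conjg G y m0)"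
      unfolding m0_def using g.conjg_conjg x yc K_G[OF n] by blast
    have "\<sigma> (\<theta> (conjg G (conjg G x y) n)) = \<theta> (conjg G y m0)" using e1 ht ym by simp
    also have "\<dots> = \<theta> m0" using y m0 unfolding stab_def by blast
    also have "\<dots> = \<sigma> (\<theta> n)" using ht m0 xm by metis
    finally have "\<sigma> (\<theta> (conjg G (conjg G x y) n)) = \<sigma> (\<theta> n)" .
    moreover have "conjg G (conjg G x y) n \<in> K" using conjK x yc n by simp
    ultimately show ?thesis using gal_inj[OF sg] theta_Qab n by blast
  qed
  then show ?thesis using x yc unfolding stab_def by simp
qed

lemma P_QabM: "y \<in> S \<Longrightarrow> QabM d (P y)"
  unfolding QabM_def using AP_mat by blast

lemma P_nz_entry: "y \<in> S \<Longrightarrow> \<exists>i<d. \<exists>j<d. P y $$ (i,j) \<noteq> 0"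
  using invertible_nz[OF conjunct1[OF conjunct2[OF AP_mat]] conjunct1[OF AP_mat] dpos] .

lemma Rel:
  assumes xh: "xh \<in> carrier Gh" and sg: "\<sigma> \<in> galQab"
    and A: "A \<in> carrier_mat d d" and B: "B \<in> carrier_mat d d"
    and hmu: "\<forall>yh\<in>Sh. map_mat \<sigma> (Ph (conjg Gh xh yh)) = \<mu>h yh \<cdot>\<^sub>m (B * Ph yh * A)"
    and norm: "\<forall>y\<in>S. conjg G (\<tau> xh) y \<in> S"
    and y: "y \<in> S" and yh: "yh \<in> carrier Gh" and c0: "inv\<^bsub>G\<^esub> y \<otimes>\<^bsub>G\<^esub> \<tau> yh \<in> Z"
  shows "\<sigma> (\<zeta> (inv\<^bsub>G\<^esub> (conjg G (\<tau> xh) y) \<otimes>\<^bsub>G\<^esub> \<tau> (conjg Gh xh yh))) \<cdot>\<^sub>m map_mat \<sigma> (P (conjg G (\<tau> xh) y))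
     = (\<sigma> (\<alpha> (conjg G (\<tau> xh) y) (inv\<^bsub>G\<^esub> (conjg G (\<tau> xh) y) \<otimes>\<^bsub>G\<^esub> \<tau> (conjg Gh xh yh))) * \<mu>h yh
        * (\<zeta> (inv\<^bsub>G\<^esub> y \<otimes>\<^bsub>G\<^esub> \<tau> yh) / \<alpha> y (inv\<^bsub>G\<^esub> y \<otimes>\<^bsub>G\<^esub> \<tau> yh))) \<cdot>\<^sub>m (B * P y * A)"
proof -
  define x where "x = \<tau> xh"
  define v where "v = conjg G x y"
  define w where "w = conjg Gh xh yh"
  define c0' where "c0' = inv\<^bsub>G\<^esub> y \<otimes>\<^bsub>G\<^esub> \<tau> yh"
  define c1 where "c1 = inv\<^bsub>G\<^esub> v \<otimes>\<^bsub>G\<^esub> \<tau> w"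
  have xc: "x \<in> carrier G" unfolding x_def using tau_car xh by blast
  have yc: "y \<in> carrier G" using y S_car by blast
  have c0Z: "c0' \<in> Z" unfolding c0'_def using c0 .
  have ty: "\<tau> yh = y \<otimes>\<^bsub>G\<^esub> c0'" unfolding c0'_def using yc tau_car[OF yh]
    by (simp add: g.m_assoc[symmetric])
  have tyS: "\<tau> yh \<in> S" using ty S_mult y Z_S c0Z by simp
  have yhS: "yh \<in> Sh" using tau_stab yh tyS by blast
  have wc: "w \<in> carrier Gh" unfolding w_def using xh yh by simp
  have vS: "v \<in> S" unfolding v_def x_def using norm y by blast
  have c1Z: "c1 \<in> Z" unfolding c1_def v_def w_def x_def using Z3 xh yc yh c0 by blast
  have tw: "\<tau> w = v \<otimes>\<^bsub>G\<^esub> c1" unfolding c1_def using S_car[OF vS] tau_car[OF wc]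
    by (simp add: g.m_assoc[symmetric])
  have Pw: "P (\<tau> w) = (\<zeta> c1 / \<alpha> v c1) \<cdot>\<^sub>m P v" using tw P_Z[OF vS c1Z] by simp
  have Py: "P (\<tau> yh) = (\<zeta> c0' / \<alpha> y c0') \<cdot>\<^sub>m P y" using ty P_Z[OF y c0Z] by simp
  have a1: "\<alpha> v c1 \<noteq> 0" "root_of_unity (\<alpha> v c1)" using AP_mult[OF vS Z_S[OF c1Z]] roots vS Z_S[OF c1Z] by auto
  have z1: "root_of_unity (\<zeta> c1)" using Z_P c1Z by blast
  have q: "\<zeta> c1 / \<alpha> v c1 \<in> Qab" using root_Qab[OF z1] root_Qab[OF a1(2)] Qab_div by blast
  have "map_mat \<sigma> (P (\<tau> w)) = \<mu>h yh \<cdot>\<^sub>m (B * P (\<tau> yh) * A)"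
    using hmu yhS unfolding Ph_def w_def by blast
  then have "\<sigma> (\<zeta> c1 / \<alpha> v c1) \<cdot>\<^sub>m map_mat \<sigma> (P v) = (\<mu>h yh * (\<zeta> c0' / \<alpha> y c0')) \<cdot>\<^sub>m (B * P y * A)"
    using Pw Py map_smult[OF sg q P_QabM[OF vS]] sandwich_smult[OF A B AP_mat[OF y, THEN conjunct1]]
    by (simp add: smult_smult_mat)
  then have "\<sigma> (\<alpha> v c1) \<cdot>\<^sub>m (\<sigma> (\<zeta> c1 / \<alpha> v c1) \<cdot>\<^sub>m map_mat \<sigma> (P v)) =
     (\<sigma> (\<alpha> v c1) * (\<mu>h yh * (\<zeta> c0' / \<alpha> y c0'))) \<cdot>\<^sub>m (B * P y * A)"
    by (simp add: smult_smult_mat)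
  moreover have "\<sigma> (\<alpha> v c1) * \<sigma> (\<zeta> c1 / \<alpha> v c1) = \<sigma> (\<zeta> c1)"
    using gal_mult[OF sg root_Qab[OF a1(2)] q] a1(1) by simp
  ultimately show ?thesis unfolding c1_def v_def w_def x_def c0'_def
    by (simp add: smult_smult_mat mult.assoc)
qed

lemma mu_transfer:
  assumes xh: "xh \<in> carrier Gh" and sg: "\<sigma> \<in> galQab"
    and ht: "\<forall>k\<in>K. \<sigma> (\<theta> (conjg G (\<tau> xh) k)) = \<theta> k"
    and mu: "is_mu Gh K \<theta> d Ph xh \<sigma> \<mu>h"
  shows "\<exists>\<mu>. is_mu G K \<theta> d P (\<tau> xh) \<sigma> \<mu> \<and>
    (\<forall>yh\<in>Sh. conjg G (\<tau> xh) (\<tau> yh) \<in> S \<and>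
       inv\<^bsub>G\<^esub> (conjg G (\<tau> xh) (\<tau> yh)) \<otimes>\<^bsub>G\<^esub> \<tau> (conjg Gh xh yh) \<in> Z \<and>
       \<sigma> (\<zeta> (inv\<^bsub>G\<^esub> (conjg G (\<tau> xh) (\<tau> yh)) \<otimes>\<^bsub>G\<^esub> \<tau> (conjg Gh xh yh))) * \<mu> (\<tau> yh) =
       \<sigma> (\<alpha> (conjg G (\<tau> xh) (\<tau> yh)) (inv\<^bsub>G\<^esub> (conjg G (\<tau> xh) (\<tau> yh)) \<otimes>\<^bsub>G\<^esub> \<tau> (conjg Gh xh yh)))
         * \<mu>h yh * (\<zeta> \<one>\<^bsub>G\<^esub> / \<alpha> (\<tau> yh) \<one>\<^bsub>G\<^esub>))"
proof -
  define x where "x = \<tau> xh"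
  have xc: "x \<in> carrier G" unfolding x_def using tau_car xh by blast
  obtain A B where A: "A \<in> carrier_mat d d" and B: "B \<in> carrier_mat d d"
    and AB: "A * B = 1\<^sub>m d" and BA: "B * A = 1\<^sub>m d"
    and hmu: "\<forall>yh\<in>Sh. map_mat \<sigma> (Ph (conjg Gh xh yh)) = \<mu>h yh \<cdot>\<^sub>m (B * Ph yh * A)"
    using mu unfolding is_mu_def by blast
  have mu_const: "\<forall>y\<in>Sh. \<forall>n\<in>K. \<mu>h (n \<otimes>\<^bsub>Gh\<^esub> y) = \<mu>h y" and mu_one: "\<mu>h \<one>\<^bsub>Gh\<^esub> = 1"
    using mu unfolding is_mu_def by blast+
  have norm: "\<forall>y\<in>S. conjg G x y \<in> S" using normalizes[OF sg xc] ht unfolding x_def by blast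
  define X where "X y = B * P y * A" for y
  have Xc: "X y \<in> carrier_mat d d" if "y \<in> S" for y
    unfolding X_def using A B AP_mat[OF that] by auto
  have Xnz: "\<exists>i<d. \<exists>j<d. X y $$ (i,j) \<noteq> 0" if y: "y \<in> S" for y
  proof (rule ccontr)
    assume "\<not> ?thesis"
    then have X0: "X y = 0\<^sub>m d d" using Xc[OF y] by (intro eq_matI) auto
    have "P y = A * X y * B" unfolding X_def using unsandwich[OF A B _ AB] AP_mat[OF y] by simp
    also have "\<dots> = 0\<^sub>m d d" using X0 A B by simp
    finally show False using P_nz_entry[OF y] by auto
  qed
  define Eq where "Eq y k \<longleftrightarrow> map_mat \<sigma> (P (conjg G x y)) = k \<cdot>\<^sub>m X y" for y k
  have uniq: "k = k'" if yk: "y \<in> S" "Eq y k" "Eq y k'" for y k k'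
  proof -
    obtain i j where "i < d" "j < d" "X y $$ (i,j) \<noteq> 0" using Xnz[OF yk(1)] by blast
    then show ?thesis using smult_cancel[OF Xc[OF yk(1)] \<open>i < d\<close> \<open>j < d\<close> \<open>X y $$ (i,j) \<noteq> 0\<close>] yk(2,3)
      unfolding Eq_def by simp
  qed
  have ex: "\<exists>k. Eq y k" if y: "y \<in> S" for y
  proof -
    have yc: "y \<in> carrier G" using y S_car by blast
    obtain yh where yh: "yh \<in> carrier Gh" and c0: "inv\<^bsub>G\<^esub> y \<otimes>\<^bsub>G\<^esub> \<tau> yh \<in> Z" using Z2[OF yc] by blast
    have R: "\<sigma> (\<zeta> (inv\<^bsub>G\<^esub> (conjg G (\<tau> xh) y) \<otimes>\<^bsub>G\<^esub> \<tau> (conjg Gh xh yh))) \<cdot>\<^sub>m map_mat \<sigma> (P (conjg G (\<tau> xh) y))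
     = (\<sigma> (\<alpha> (conjg G (\<tau> xh) y) (inv\<^bsub>G\<^esub> (conjg G (\<tau> xh) y) \<otimes>\<^bsub>G\<^esub> \<tau> (conjg Gh xh yh))) * \<mu>h yh
        * (\<zeta> (inv\<^bsub>G\<^esub> y \<otimes>\<^bsub>G\<^esub> \<tau> yh) / \<alpha> y (inv\<^bsub>G\<^esub> y \<otimes>\<^bsub>G\<^esub> \<tau> yh))) \<cdot>\<^sub>m (B * P y * A)"
      by (rule Rel[OF xh sg A B hmu norm[unfolded x_def] y yh c0])
    define c1 where "c1 = inv\<^bsub>G\<^esub> (conjg G (\<tau> xh) y) \<otimes>\<^bsub>G\<^esub> \<tau> (conjg Gh xh yh)"
    have c1Z: "c1 \<in> Z" unfolding c1_def using Z3[OF xh yc yh c0] .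
    have zr: "root_of_unity (\<zeta> c1)" using Z_P[OF c1Z] by blast
    have nz: "\<sigma> (\<zeta> c1) \<noteq> 0" using gal_nz[OF sg root_Qab[OF zr] root_nz[OF zr]] .
    define K0 where "K0 = \<sigma> (\<alpha> (conjg G (\<tau> xh) y) c1) * \<mu>h yh
        * (\<zeta> (inv\<^bsub>G\<^esub> y \<otimes>\<^bsub>G\<^esub> \<tau> yh) / \<alpha> y (inv\<^bsub>G\<^esub> y \<otimes>\<^bsub>G\<^esub> \<tau> yh))"
    have R2: "\<sigma> (\<zeta> c1) \<cdot>\<^sub>m map_mat \<sigma> (P (conjg G (\<tau> xh) y)) = K0 \<cdot>\<^sub>m (B * P y * A)"
      using R unfolding c1_def K0_def .
    have "map_mat \<sigma> (P (conjg G (\<tau> xh) y)) = (1 / \<sigma> (\<zeta> c1)) \<cdot>\<^sub>m (K0 \<cdot>\<^sub>m (B * P y * A))"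
      by (rule smult_solve[OF nz R2])
    then have "map_mat \<sigma> (P (conjg G x y)) = ((1 / \<sigma> (\<zeta> c1)) * K0) \<cdot>\<^sub>m X y"
      unfolding X_def x_def by (simp add: smult_smult_mat)
    then show ?thesis unfolding Eq_def by blast
  qed
  define \<mu> where "\<mu> y = (SOME k. Eq y k)" for y
  have Eq_mu: "Eq y (\<mu> y)" if "y \<in> S" for y
    unfolding \<mu>_def using someI_ex[OF ex[OF that]] .
  have K_Sh: "n \<in> Sh" if "n \<in> K" for n
    using tau_stab[OF K_H[OF that]] tau_K[OF that] K_S[OF that] by simp
  have one_Sh: "\<one>\<^bsub>Gh\<^esub> \<in> Sh" using tau_stab[OF h.one_closed] tau_one S_one by simp
  have P_cn: "map_mat \<sigma> (P (conjg G x n)) = X n" if n: "n \<in> K" for n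
  proof -
    have "n \<otimes>\<^bsub>Gh\<^esub> \<one>\<^bsub>Gh\<^esub> = n" using K_H[OF n] by simp
    then have m1: "\<mu>h n = 1" using mu_const[rule_format, OF one_Sh n] mu_one by simp
    have e1: "conjg Gh xh n = conjg G x n" using tau_conj xh n unfolding x_def by simp
    have e2: "\<tau> (conjg G x n) = conjg G x n" using tau_K[OF conjK[OF xc n]] .
    have "map_mat \<sigma> (Ph (conjg Gh xh n)) = \<mu>h n \<cdot>\<^sub>m (B * Ph n * A)" using hmu K_Sh[OF n] by blast
    then show ?thesis using m1 e1 e2 tau_K[OF n] unfolding Ph_def X_def by (simp add: one_smult_mat')
  qed
  have ismu: "is_mu G K \<theta> d P x \<sigma> \<mu>"
    unfolding is_mu_def
  proof (intro conjI)
    show "\<forall>y\<in>S. \<mu> y \<noteq> 0"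
    proof
      fix y assume y: "y \<in> S"
      have vS: "conjg G x y \<in> S" using norm y by blast
      obtain i j where ij: "i < d" "j < d" "P (conjg G x y) $$ (i,j) \<noteq> 0" using P_nz_entry[OF vS] by blast
      have "P (conjg G x y) $$ (i,j) \<in> Qab" using AP_mat[OF vS] ij by blast
      then have "\<sigma> (P (conjg G x y) $$ (i,j)) \<noteq> 0" using gal_nz[OF sg] ij by blast
      moreover have "map_mat \<sigma> (P (conjg G x y)) $$ (i,j) = \<sigma> (P (conjg G x y) $$ (i,j))"
        using AP_mat[OF vS] ij by auto
      ultimately show "\<mu> y \<noteq> 0" using Eq_mu[OF y] Xc[OF y] ij unfolding Eq_def by auto
    qed
  next
    show "\<forall>y\<in>S. \<forall>n\<in>K. \<mu> (n \<otimes>\<^bsub>G\<^esub> y) = \<mu> y"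
    proof (intro ballI)
      fix y n assume y: "y \<in> S" and n: "n \<in> K"
      have yc: "y \<in> carrier G" using y S_car by blast
      have nyS: "n \<otimes>\<^bsub>G\<^esub> y \<in> S" using S_mult K_S[OF n] y by blast
      have vS: "conjg G x y \<in> S" using norm y by blast
      have cn: "conjg G x n \<in> K" using conjK xc n by blast
      have "conjg G x (n \<otimes>\<^bsub>G\<^esub> y) = conjg G x n \<otimes>\<^bsub>G\<^esub> conjg G x y"
        using g.conjg_hom xc K_G[OF n] yc by blast
      then have "P (conjg G x (n \<otimes>\<^bsub>G\<^esub> y)) = P (conjg G x n) * P (conjg G x y)"
        using AP_left[OF cn vS] by simp
      then have "map_mat \<sigma> (P (conjg G x (n \<otimes>\<^bsub>G\<^esub> y))) = X n * (\<mu> y \<cdot>\<^sub>m X y)"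
        using map_mult[OF sg P_QabM[OF K_S[OF cn]] P_QabM[OF vS]] P_cn[OF n] Eq_mu[OF y]
        unfolding Eq_def by simp
      also have "\<dots> = \<mu> y \<cdot>\<^sub>m (X n * X y)"
        using mult_smult_distrib[OF Xc[OF K_S[OF n]] Xc[OF y]] .
      also have "X n * X y = X (n \<otimes>\<^bsub>G\<^esub> y)"
        unfolding X_def using sandwich_mult[OF A B _ _ AB] AP_mat K_S[OF n] y AP_left[OF n y] by simp
      finally have "Eq (n \<otimes>\<^bsub>G\<^esub> y) (\<mu> y)" unfolding Eq_def .
      then show "\<mu> (n \<otimes>\<^bsub>G\<^esub> y) = \<mu> y" using uniq[OF nyS Eq_mu[OF nyS]] by blast
    qed
  next
    have "Eq \<one>\<^bsub>G\<^esub> 1" unfolding Eq_def X_def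
      using rep_one map_one[OF sg] sandwich_one[OF A B BA] xc by (simp add: one_smult_mat')
    then show "\<mu> \<one>\<^bsub>G\<^esub> = 1" using uniq[OF S_one Eq_mu[OF S_one]] by blast
  next
    show "\<exists>A B. A \<in> carrier_mat d d \<and> B \<in> carrier_mat d d \<and> A * B = 1\<^sub>m d \<and> B * A = 1\<^sub>m d \<and>
        (\<forall>y\<in>S. map_mat \<sigma> (P (conjg G x y)) = \<mu> y \<cdot>\<^sub>m (B * P y * A))"
      using A B AB BA Eq_mu unfolding Eq_def X_def by blast
  qed
  have rel: "\<forall>yh\<in>Sh. conjg G (\<tau> xh) (\<tau> yh) \<in> S \<and>
       inv\<^bsub>G\<^esub> (conjg G (\<tau> xh) (\<tau> yh)) \<otimes>\<^bsub>G\<^esub> \<tau> (conjg Gh xh yh) \<in> Z \<and>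
       \<sigma> (\<zeta> (inv\<^bsub>G\<^esub> (conjg G (\<tau> xh) (\<tau> yh)) \<otimes>\<^bsub>G\<^esub> \<tau> (conjg Gh xh yh))) * \<mu> (\<tau> yh) =
       \<sigma> (\<alpha> (conjg G (\<tau> xh) (\<tau> yh)) (inv\<^bsub>G\<^esub> (conjg G (\<tau> xh) (\<tau> yh)) \<otimes>\<^bsub>G\<^esub> \<tau> (conjg Gh xh yh)))
         * \<mu>h yh * (\<zeta> \<one>\<^bsub>G\<^esub> / \<alpha> (\<tau> yh) \<one>\<^bsub>G\<^esub>)"
  proof
    fix yh assume yhS: "yh \<in> Sh"
    have yh: "yh \<in> carrier Gh" using yhS Sh_car by blast
    define y where "y = \<tau> yh"
    have y: "y \<in> S" unfolding y_def using tau_stab yh yhS by blast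
    have yc: "y \<in> carrier G" using y S_car by blast
    have c0e: "inv\<^bsub>G\<^esub> y \<otimes>\<^bsub>G\<^esub> \<tau> yh = \<one>\<^bsub>G\<^esub>" unfolding y_def using tau_car[OF yh] by simp
    have c0: "inv\<^bsub>G\<^esub> y \<otimes>\<^bsub>G\<^esub> \<tau> yh \<in> Z" using c0e Z_one by simp
    have R: "\<sigma> (\<zeta> (inv\<^bsub>G\<^esub> (conjg G (\<tau> xh) y) \<otimes>\<^bsub>G\<^esub> \<tau> (conjg Gh xh yh))) \<cdot>\<^sub>m map_mat \<sigma> (P (conjg G (\<tau> xh) y))
     = (\<sigma> (\<alpha> (conjg G (\<tau> xh) y) (inv\<^bsub>G\<^esub> (conjg G (\<tau> xh) y) \<otimes>\<^bsub>G\<^esub> \<tau> (conjg Gh xh yh))) * \<mu>h yh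
        * (\<zeta> (inv\<^bsub>G\<^esub> y \<otimes>\<^bsub>G\<^esub> \<tau> yh) / \<alpha> y (inv\<^bsub>G\<^esub> y \<otimes>\<^bsub>G\<^esub> \<tau> yh))) \<cdot>\<^sub>m (B * P y * A)"
      by (rule Rel[OF xh sg A B hmu norm[unfolded x_def] y yh c0])
    define c1 where "c1 = inv\<^bsub>G\<^esub> (conjg G (\<tau> xh) y) \<otimes>\<^bsub>G\<^esub> \<tau> (conjg Gh xh yh)"
    have c1Z: "c1 \<in> Z" unfolding c1_def using Z3[OF xh yc yh c0] .
    have "Eq y (\<mu> y)" using Eq_mu[OF y] .
    then have "(\<sigma> (\<zeta> c1) * \<mu> y) \<cdot>\<^sub>m X y = \<sigma> (\<zeta> c1) \<cdot>\<^sub>m map_mat \<sigma> (P (conjg G (\<tau> xh) y))"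
      unfolding Eq_def x_def by (simp add: smult_smult_mat)
    also have "\<dots> = (\<sigma> (\<alpha> (conjg G (\<tau> xh) y) c1) * \<mu>h yh * (\<zeta> \<one>\<^bsub>G\<^esub> / \<alpha> y \<one>\<^bsub>G\<^esub>)) \<cdot>\<^sub>m X y"
      using R unfolding c1_def X_def c0e .
    finally have eqX: "(\<sigma> (\<zeta> c1) * \<mu> y) \<cdot>\<^sub>m X y = (\<sigma> (\<alpha> (conjg G (\<tau> xh) y) c1) * \<mu>h yh * (\<zeta> \<one>\<^bsub>G\<^esub> / \<alpha> y \<one>\<^bsub>G\<^esub>)) \<cdot>\<^sub>m X y" .
    obtain i j where ij: "i < d" "j < d" "X y $$ (i,j) \<noteq> 0" using Xnz[OF y] by blast
    have "\<sigma> (\<zeta> c1) * \<mu> y = \<sigma> (\<alpha> (conjg G (\<tau> xh) y) c1) * \<mu>h yh * (\<zeta> \<one>\<^bsub>G\<^esub> / \<alpha> y \<one>\<^bsub>G\<^esub>)"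
      by (rule smult_cancel[OF Xc[OF y] ij eqX])
    then show "conjg G (\<tau> xh) (\<tau> yh) \<in> S \<and>
       inv\<^bsub>G\<^esub> (conjg G (\<tau> xh) (\<tau> yh)) \<otimes>\<^bsub>G\<^esub> \<tau> (conjg Gh xh yh) \<in> Z \<and>
       \<sigma> (\<zeta> (inv\<^bsub>G\<^esub> (conjg G (\<tau> xh) (\<tau> yh)) \<otimes>\<^bsub>G\<^esub> \<tau> (conjg Gh xh yh))) * \<mu> (\<tau> yh) =
       \<sigma> (\<alpha> (conjg G (\<tau> xh) (\<tau> yh)) (inv\<^bsub>G\<^esub> (conjg G (\<tau> xh) (\<tau> yh)) \<otimes>\<^bsub>G\<^esub> \<tau> (conjg Gh xh yh)))
         * \<mu>h yh * (\<zeta> \<one>\<^bsub>G\<^esub> / \<alpha> (\<tau> yh) \<one>\<^bsub>G\<^esub>)"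
      using c1Z norm y unfolding c1_def y_def x_def by simp
  qed
  show ?thesis using ismu rel unfolding x_def by blast
qed

end


lemma set_mult_mem: "x \<in> A <#>\<^bsub>G\<^esub> B \<longleftrightarrow> (\<exists>a\<in>A. \<exists>b\<in>B. x = a \<otimes>\<^bsub>G\<^esub> b)"
  unfolding set_mult_def by auto

lemma conj_image_pt:
  assumes "restrict (conjg A a) N = restrict (conjg B b) N" "n \<in> N"
  shows "conjg A a n = conjg B b n"
  using fun_cong[OF assms(1), of n] assms(2) by simp

lemma conj_image_ex:
  assumes "conj_image A N X = conj_image B N Y" "x \<in> X"
  shows "\<exists>y\<in>Y. \<forall>n\<in>N. conjg B y n = conjg A x n"
proof -
  have "restrict (conjg A x) N \<in> conj_image B N Y" using assms unfolding conj_image_def by auto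
  then obtain y where "y \<in> Y" "restrict (conjg A x) N = restrict (conjg B y) N"
    unfolding conj_image_def by auto
  then show ?thesis using conj_image_pt by metis
qed

lemma assoc_dpos:
  assumes "irr_char G N \<theta>" "assoc_proj G N \<theta> d P \<alpha>" "\<one>\<^bsub>G\<^esub> \<in> N"
  shows "d > 0"
proof -
  obtain d0 \<rho> where ir: "irreducible_rep G N d0 \<rho>" and tr: "\<forall>n\<in>N. \<theta> n = mat_trace (\<rho> n)"
    using assms(1) unfolding irr_char_def by blast
  have d0: "d0 > 0" "\<rho> \<one>\<^bsub>G\<^esub> = 1\<^sub>m d0" using ir unfolding irreducible_rep_def is_rep_def by auto
  have "P \<one>\<^bsub>G\<^esub> = 1\<^sub>m d" "mat_trace (P \<one>\<^bsub>G\<^esub>) = \<theta> \<one>\<^bsub>G\<^esub>"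
    using assms(2,3) unfolding assoc_proj_def is_rep_def by auto
  then have "(of_nat d :: complex) = of_nat d0" using tr assms(3) d0 by (simp add: mat_trace_one)
  then show ?thesis using d0 by simp
qed

lemma conjg_restr: assumes "group G" "subgroup H G" "x \<in> H"
  shows "conjg (G\<lparr>carrier := H\<rparr>) x y = conjg G x y"
  unfolding conjg_def using group.m_inv_consistent[OF assms] by simp

locale ctx = g: group G + h: group Gh for G Gh :: "'a monoid" +
  fixes p :: nat and N M H Hh :: "'a set" and \<theta> \<phi> :: "'a \<Rightarrow> complex"
    and d :: nat and P :: "'a \<Rightarrow> complex mat" and \<alpha> :: "'a \<Rightarrow> 'a \<Rightarrow> complex"
    and d' :: nat and P' :: "'a \<Rightarrow> complex mat" and \<alpha>' :: "'a \<Rightarrow> 'a \<Rightarrow> complex"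
  assumes fin: "finite (carrier G)"
    and NGh: "N \<lhd> Gh"
    and mult_eq: "\<forall>a\<in>N. \<forall>b\<in>N. a \<otimes>\<^bsub>Gh\<^esub> b = a \<otimes>\<^bsub>G\<^esub> b"
    and conjim: "conj_image Gh N (carrier Gh) = conj_image G N (carrier G)"
    and sHh: "subgroup Hh Gh"
    and MC: "M <#>\<^bsub>Gh\<^esub> centralizer_in Gh N \<subseteq> Hh"
    and conjimH: "conj_image Gh N Hh = conj_image G N H"
    and HT: "H_triple p G N \<theta>" and sH: "subgroup H G"
    and HT': "H_triple p (G\<lparr>carrier := H\<rparr>) M \<phi>"
    and NH: "N <#>\<^bsub>G\<^esub> H = carrier G" and NHM: "N \<inter> H = M"
    and CH: "centralizer_in G N \<subseteq> H"
    and SP: "stab_pairs p H G N \<theta> = stab_pairs p H G M \<phi>"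
    and AP: "assoc_proj G N \<theta> d P \<alpha>"
    and AP': "assoc_proj (G\<lparr>carrier := H\<rparr>) M \<phi> d' P' \<alpha>'"
    and roots: "\<forall>x\<in>stab G N \<theta>. \<forall>y\<in>stab G N \<theta>. root_of_unity (\<alpha> x y)"
    and roots': "\<forall>x\<in>stab (G\<lparr>carrier := H\<rparr>) M \<phi>. \<forall>y\<in>stab (G\<lparr>carrier := H\<rparr>) M \<phi>. root_of_unity (\<alpha>' x y)"
    and aeq: "\<forall>x\<in>H \<inter> stab G N \<theta>. \<forall>y\<in>H \<inter> stab G N \<theta>. \<alpha> x y = \<alpha>' x y"
    and Ceq: "\<forall>c\<in>centralizer_in G N. \<exists>\<zeta>. P c = \<zeta> \<cdot>\<^sub>m 1\<^sub>m d \<and> P' c = \<zeta> \<cdot>\<^sub>m 1\<^sub>m d'"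
    and mueq: "\<forall>(x, \<sigma>)\<in>stab_pairs p H G N \<theta>. \<forall>\<mu> \<mu>'.
            is_mu G N \<theta> d P x \<sigma> \<mu> \<longrightarrow> is_mu (G\<lparr>carrier := H\<rparr>) M \<phi> d' P' x \<sigma> \<mu>' \<longrightarrow>
            (\<forall>y\<in>H \<inter> stab G N \<theta>. \<mu> y = \<mu>' y)"
begin

lemma NG: "N \<lhd> G" using HT unfolding H_triple_def by blast
lemma subN: "subgroup N G" using normal_imp_subgroup[OF NG] .
lemma subNh: "subgroup N Gh" using normal_imp_subgroup[OF NGh] .
lemma N_G: "n \<in> N \<Longrightarrow> n \<in> carrier G" using subgroup.mem_carrier[OF subN] .
lemma N_Gh: "n \<in> N \<Longrightarrow> n \<in> carrier Gh" using subgroup.mem_carrier[OF subNh] .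
lemma H_G: "h \<in> H \<Longrightarrow> h \<in> carrier G" using subgroup.mem_carrier[OF sH] .
lemma Hh_Gh: "h \<in> Hh \<Longrightarrow> h \<in> carrier Gh" using subgroup.mem_carrier[OF sHh] .
lemma one_eq: "\<one>\<^bsub>Gh\<^esub> = \<one>\<^bsub>G\<^esub>"
  using shared_one[OF g.group_axioms h.group_axioms subN subNh mult_eq] .
lemma inv_eq: "k \<in> N \<Longrightarrow> inv\<^bsub>Gh\<^esub> k = inv\<^bsub>G\<^esub> k"
  using shared_inv[OF g.group_axioms h.group_axioms subN subNh mult_eq] .
lemma conj_eq: "a \<in> N \<Longrightarrow> b \<in> N \<Longrightarrow> conjg Gh a b = conjg G a b"
  using shared_conjg[OF g.group_axioms h.group_axioms subN subNh mult_eq] .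
lemma mult_eq': "a \<in> N \<Longrightarrow> b \<in> N \<Longrightarrow> a \<otimes>\<^bsub>Gh\<^esub> b = a \<otimes>\<^bsub>G\<^esub> b"
  using mult_eq by blast
lemma conjN: "g \<in> carrier G \<Longrightarrow> k \<in> N \<Longrightarrow> conjg G g k \<in> N"
  unfolding conjg_def using normal.inv_op_closed2[OF NG] .
lemma conjNh: "g \<in> carrier Gh \<Longrightarrow> k \<in> N \<Longrightarrow> conjg Gh g k \<in> N"
  unfolding conjg_def using normal.inv_op_closed2[OF NGh] .
lemma N_sub: "N \<subseteq> carrier G" using N_G by blast
lemma N_subh: "N \<subseteq> carrier Gh" using N_Gh by blast

lemma act_G: "g \<in> carrier Gh \<Longrightarrow> \<exists>g'\<in>carrier G. \<forall>n\<in>N. conjg G g' n = conjg Gh g n"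
  using conj_image_ex[OF conjim] by blast
lemma act_Gh: "g \<in> carrier G \<Longrightarrow> \<exists>g'\<in>carrier Gh. \<forall>n\<in>N. conjg Gh g' n = conjg G g n"
  using conj_image_ex[OF conjim[symmetric]] by blast
lemma act_H: "g \<in> Hh \<Longrightarrow> \<exists>g'\<in>H. \<forall>n\<in>N. conjg G g' n = conjg Gh g n"
  using conj_image_ex[OF conjimH] by blast
lemma act_Hh: "g \<in> H \<Longrightarrow> \<exists>g'\<in>Hh. \<forall>n\<in>N. conjg Gh g' n = conjg G g n"
  using conj_image_ex[OF conjimH[symmetric]] by blast

lemma M_N: "M \<subseteq> N" using NHM by blast
lemma M_H: "M \<subseteq> H" using NHM by blast
lemma Ch_one: "\<one>\<^bsub>Gh\<^esub> \<in> centralizer_in Gh N" using h.centralizer_one[OF N_subh] .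
lemma M_Hh: "M \<subseteq> Hh"
proof
  fix m assume m: "m \<in> M"
  then have "m \<in> carrier Gh" using M_N N_Gh by blast
  then have "m = m \<otimes>\<^bsub>Gh\<^esub> \<one>\<^bsub>Gh\<^esub>" by simp
  then have "m \<in> M <#>\<^bsub>Gh\<^esub> centralizer_in Gh N" unfolding set_mult_mem using m Ch_one by blast
  then show "m \<in> Hh" using MC by blast
qed
lemma C_Hh: "centralizer_in Gh N \<subseteq> Hh"
proof
  fix c assume c: "c \<in> centralizer_in Gh N"
  then have "c \<in> carrier Gh" using h.centralizer_sub by blast
  then have "c = \<one>\<^bsub>Gh\<^esub> \<otimes>\<^bsub>Gh\<^esub> c" by simp
  moreover have "\<one>\<^bsub>Gh\<^esub> \<in> M" using one_eq subgroup.one_closed[OF sH] subgroup.one_closed[OF subN] NHM by auto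
  ultimately have "c \<in> M <#>\<^bsub>Gh\<^esub> centralizer_in Gh N" unfolding set_mult_mem using c by blast
  then show "c \<in> Hh" using MC by blast
qed

lemma NHh: "N \<inter> Hh = M"
proof
  show "M \<subseteq> N \<inter> Hh" using M_N M_Hh by blast
next
  show "N \<inter> Hh \<subseteq> M"
  proof
    fix n assume n: "n \<in> N \<inter> Hh"
    obtain h where h: "h \<in> H" and hact: "\<forall>k\<in>N. conjg G h k = conjg Gh n k" using act_H n by blast
    have hc: "h \<in> carrier G" using H_G h .
    have nc: "n \<in> carrier G" using N_G n by blast
    have "\<forall>k\<in>N. conjg G n k = conjg G h k" using hact conj_eq n by simp
    then have c: "inv\<^bsub>G\<^esub> n \<otimes>\<^bsub>G\<^esub> h \<in> centralizer_in G N"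
      using g.same_action_centralizer[OF nc hc N_sub] by blast
    then have cH: "inv\<^bsub>G\<^esub> n \<otimes>\<^bsub>G\<^esub> h \<in> H" using CH by blast
    have "n = h \<otimes>\<^bsub>G\<^esub> inv\<^bsub>G\<^esub> (inv\<^bsub>G\<^esub> n \<otimes>\<^bsub>G\<^esub> h)" using nc hc
      by (simp add: g.inv_mult_group g.m_assoc[symmetric])
    then have "n \<in> H" using subgroup.m_closed[OF sH h subgroup.m_inv_closed[OF sH cH]] by simp
    then show "n \<in> M" using n NHM by blast
  qed
qed

lemma NHh_prod: "N <#>\<^bsub>Gh\<^esub> Hh = carrier Gh"
proof
  show "N <#>\<^bsub>Gh\<^esub> Hh \<subseteq> carrier Gh" unfolding set_mult_def using N_Gh Hh_Gh by auto
next
  show "carrier Gh \<subseteq> N <#>\<^bsub>Gh\<^esub> Hh"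
  proof
    fix g assume g: "g \<in> carrier Gh"
    obtain g' where g': "g' \<in> carrier G" and gact: "\<forall>k\<in>N. conjg G g' k = conjg Gh g k" using act_G g by blast
    obtain n h where n: "n \<in> N" and h: "h \<in> H" and ge: "g' = n \<otimes>\<^bsub>G\<^esub> h"
    proof -
      have "g' \<in> N <#>\<^bsub>G\<^esub> H" using g' NH by simp
      then show ?thesis using that unfolding set_mult_mem by blast
    qed
    obtain hh where hh: "hh \<in> Hh" and hact: "\<forall>k\<in>N. conjg Gh hh k = conjg G h k" using act_Hh h by blast
    have nc: "n \<in> carrier Gh" using N_Gh n .
    have hhc: "hh \<in> carrier Gh" using Hh_Gh hh .
    have "\<forall>k\<in>N. conjg Gh (n \<otimes>\<^bsub>Gh\<^esub> hh) k = conjg Gh g k"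
    proof
      fix k assume k: "k \<in> N"
      have "conjg Gh (n \<otimes>\<^bsub>Gh\<^esub> hh) k = conjg Gh n (conjg Gh hh k)" using h.conjg_mult nc hhc N_Gh k by blast
      also have "\<dots> = conjg G n (conjg G h k)" using hact k conj_eq n conjN H_G h by simp
      also have "\<dots> = conjg G g' k" using ge g.conjg_mult N_G n H_G h k by simp
      finally show "conjg Gh (n \<otimes>\<^bsub>Gh\<^esub> hh) k = conjg Gh g k" using gact k by simp
    qed
    then have c: "inv\<^bsub>Gh\<^esub> (n \<otimes>\<^bsub>Gh\<^esub> hh) \<otimes>\<^bsub>Gh\<^esub> g \<in> centralizer_in Gh N"
      using h.same_action_centralizer[OF _ g N_subh] nc hhc by simp
    then have cH: "inv\<^bsub>Gh\<^esub> (n \<otimes>\<^bsub>Gh\<^esub> hh) \<otimes>\<^bsub>Gh\<^esub> g \<in> Hh" using C_Hh by blast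
    have "g = n \<otimes>\<^bsub>Gh\<^esub> (hh \<otimes>\<^bsub>Gh\<^esub> (inv\<^bsub>Gh\<^esub> (n \<otimes>\<^bsub>Gh\<^esub> hh) \<otimes>\<^bsub>Gh\<^esub> g))"
      using nc hhc g by (simp add: h.m_assoc[symmetric])
    moreover have "hh \<otimes>\<^bsub>Gh\<^esub> (inv\<^bsub>Gh\<^esub> (n \<otimes>\<^bsub>Gh\<^esub> hh) \<otimes>\<^bsub>Gh\<^esub> g) \<in> Hh"
      using subgroup.m_closed[OF sHh hh cH] .
    ultimately show "g \<in> N <#>\<^bsub>Gh\<^esub> Hh" unfolding set_mult_mem using n by blast
  qed
qed

lemma N_left_mem: assumes k: "k \<in> N" and x: "x \<in> carrier Gh"
  shows "k \<otimes>\<^bsub>Gh\<^esub> x \<in> N \<longleftrightarrow> x \<in> N"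
proof
  assume "k \<otimes>\<^bsub>Gh\<^esub> x \<in> N"
  moreover have "x = inv\<^bsub>Gh\<^esub> k \<otimes>\<^bsub>Gh\<^esub> (k \<otimes>\<^bsub>Gh\<^esub> x)" using N_Gh[OF k] x by (simp add: h.m_assoc[symmetric])
  ultimately show "x \<in> N" using subgroup.m_closed[OF subNh subgroup.m_inv_closed[OF subNh k]] by metis
next
  assume "x \<in> N" then show "k \<otimes>\<^bsub>Gh\<^esub> x \<in> N" using subgroup.m_closed[OF subNh k] by blast
qed

definition rr :: "'a \<Rightarrow> 'a" where
  "rr g = (if g \<in> N then \<one>\<^bsub>Gh\<^esub> else (SOME h. h \<in> Hh \<and> g \<otimes>\<^bsub>Gh\<^esub> inv\<^bsub>Gh\<^esub> h \<in> N))"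
definition tt :: "'a \<Rightarrow> 'a" where
  "tt h = (if h = \<one>\<^bsub>Gh\<^esub> then \<one>\<^bsub>G\<^esub> else (SOME h'. h' \<in> H \<and> (\<forall>n\<in>N. conjg G h' n = conjg Gh h n)))"
definition tau :: "'a \<Rightarrow> 'a" where
  "tau g = (g \<otimes>\<^bsub>Gh\<^esub> inv\<^bsub>Gh\<^esub> (rr g)) \<otimes>\<^bsub>G\<^esub> tt (rr g)"

lemma rr_props: assumes g: "g \<in> carrier Gh" shows "rr g \<in> Hh \<and> g \<otimes>\<^bsub>Gh\<^esub> inv\<^bsub>Gh\<^esub> (rr g) \<in> N"
proof (cases "g \<in> N")
  case True
  then show ?thesis unfolding rr_def using subgroup.one_closed[OF sHh] g by simp
next
  case False
  have "g \<in> N <#>\<^bsub>Gh\<^esub> Hh" using g NHh_prod by simp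
  then obtain n h where n: "n \<in> N" and h: "h \<in> Hh" and ge: "g = n \<otimes>\<^bsub>Gh\<^esub> h" unfolding set_mult_mem by blast
  have "g \<otimes>\<^bsub>Gh\<^esub> inv\<^bsub>Gh\<^esub> h = n" using ge N_Gh[OF n] Hh_Gh[OF h] by (simp add: h.m_assoc)
  then have "\<exists>h. h \<in> Hh \<and> g \<otimes>\<^bsub>Gh\<^esub> inv\<^bsub>Gh\<^esub> h \<in> N" using h n by blast
  from someI_ex[OF this] show ?thesis unfolding rr_def using False by simp
qed

lemma rr_left: assumes k: "k \<in> N" and g: "g \<in> carrier Gh" shows "rr (k \<otimes>\<^bsub>Gh\<^esub> g) = rr g"
proof (cases "g \<in> N")
  case True
  then show ?thesis unfolding rr_def using N_left_mem[OF k g] by simp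
next
  case False
  then have F: "k \<otimes>\<^bsub>Gh\<^esub> g \<notin> N" using N_left_mem[OF k g] by simp
  have "(h \<in> Hh \<and> (k \<otimes>\<^bsub>Gh\<^esub> g) \<otimes>\<^bsub>Gh\<^esub> inv\<^bsub>Gh\<^esub> h \<in> N) = (h \<in> Hh \<and> g \<otimes>\<^bsub>Gh\<^esub> inv\<^bsub>Gh\<^esub> h \<in> N)" for h
  proof (cases "h \<in> Hh")
    case True
    have "(k \<otimes>\<^bsub>Gh\<^esub> g) \<otimes>\<^bsub>Gh\<^esub> inv\<^bsub>Gh\<^esub> h = k \<otimes>\<^bsub>Gh\<^esub> (g \<otimes>\<^bsub>Gh\<^esub> inv\<^bsub>Gh\<^esub> h)"
      using N_Gh[OF k] g Hh_Gh[OF True] by (simp add: h.m_assoc)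
    then show ?thesis using N_left_mem[OF k] g Hh_Gh[OF True] by simp
  qed simp
  then show ?thesis unfolding rr_def using F False by simp
qed

lemma tt_props: assumes h: "h \<in> Hh" shows "tt h \<in> H \<and> (\<forall>n\<in>N. conjg G (tt h) n = conjg Gh h n)"
proof (cases "h = \<one>\<^bsub>Gh\<^esub>")
  case True
  then show ?thesis unfolding tt_def using subgroup.one_closed[OF sH] N_G N_Gh by simp
next
  case False
  have "\<exists>h'. h' \<in> H \<and> (\<forall>n\<in>N. conjg G h' n = conjg Gh h n)" using act_H[OF h] by blast
  from someI_ex[OF this] show ?thesis unfolding tt_def using False by simp
qed

lemma tau_car: "g \<in> carrier Gh \<Longrightarrow> tau g \<in> carrier G"
  unfolding tau_def using rr_props tt_props N_G H_G by blast

lemma tau_H: assumes g: "g \<in> Hh" shows "tau g \<in> H"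
proof -
  have gc: "g \<in> carrier Gh" using Hh_Gh g .
  have r: "rr g \<in> Hh" and m: "g \<otimes>\<^bsub>Gh\<^esub> inv\<^bsub>Gh\<^esub> (rr g) \<in> N" using rr_props[OF gc] by auto
  have "g \<otimes>\<^bsub>Gh\<^esub> inv\<^bsub>Gh\<^esub> (rr g) \<in> Hh" using subgroup.m_closed[OF sHh g subgroup.m_inv_closed[OF sHh r]] .
  then have "g \<otimes>\<^bsub>Gh\<^esub> inv\<^bsub>Gh\<^esub> (rr g) \<in> H" using m NHh M_H by blast
  then show ?thesis unfolding tau_def using subgroup.m_closed[OF sH] tt_props[OF r] by blast
qed

lemma tau_conj: assumes g: "g \<in> carrier Gh" and k: "k \<in> N" shows "conjg G (tau g) k = conjg Gh g k"
proof -
  define r where "r = rr g"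
  define m where "m = g \<otimes>\<^bsub>Gh\<^esub> inv\<^bsub>Gh\<^esub> r"
  have r: "r \<in> Hh" and m: "m \<in> N" using rr_props[OF g] unfolding r_def m_def by auto
  have t: "tt r \<in> H" and tact: "\<forall>n\<in>N. conjg G (tt r) n = conjg Gh r n" using tt_props[OF r] by auto
  have rc: "r \<in> carrier Gh" using Hh_Gh r .
  have "conjg G (tau g) k = conjg G m (conjg G (tt r) k)"
    unfolding tau_def r_def[symmetric] m_def[symmetric] using g.conjg_mult N_G[OF m] H_G[OF t] N_G[OF k] by blast
  also have "\<dots> = conjg G m (conjg Gh r k)" using tact k by simp
  also have "\<dots> = conjg Gh m (conjg Gh r k)" using conj_eq m conjNh rc k by simp
  also have "\<dots> = conjg Gh (m \<otimes>\<^bsub>Gh\<^esub> r) k" using h.conjg_mult N_Gh[OF m] rc N_Gh[OF k] by simp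
  also have "m \<otimes>\<^bsub>Gh\<^esub> r = g" unfolding m_def using g rc by (simp add: h.m_assoc)
  finally show ?thesis .
qed

lemma tau_left: assumes k: "k \<in> N" and g: "g \<in> carrier Gh"
  shows "tau (k \<otimes>\<^bsub>Gh\<^esub> g) = k \<otimes>\<^bsub>G\<^esub> tau g"
proof -
  define r where "r = rr g"
  have r: "r \<in> Hh" and m: "g \<otimes>\<^bsub>Gh\<^esub> inv\<^bsub>Gh\<^esub> r \<in> N" using rr_props[OF g] unfolding r_def by auto
  have rk: "rr (k \<otimes>\<^bsub>Gh\<^esub> g) = r" unfolding r_def using rr_left[OF k g] .
  have rc: "r \<in> carrier Gh" using Hh_Gh r .
  have "(k \<otimes>\<^bsub>Gh\<^esub> g) \<otimes>\<^bsub>Gh\<^esub> inv\<^bsub>Gh\<^esub> r = k \<otimes>\<^bsub>Gh\<^esub> (g \<otimes>\<^bsub>Gh\<^esub> inv\<^bsub>Gh\<^esub> r)"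
    using N_Gh[OF k] g rc by (simp add: h.m_assoc)
  also have "\<dots> = k \<otimes>\<^bsub>G\<^esub> (g \<otimes>\<^bsub>Gh\<^esub> inv\<^bsub>Gh\<^esub> r)" using mult_eq' k m by blast
  finally have e: "(k \<otimes>\<^bsub>Gh\<^esub> g) \<otimes>\<^bsub>Gh\<^esub> inv\<^bsub>Gh\<^esub> r = k \<otimes>\<^bsub>G\<^esub> (g \<otimes>\<^bsub>Gh\<^esub> inv\<^bsub>Gh\<^esub> r)" .
  have t: "tt r \<in> H" using tt_props[OF r] by blast
  show ?thesis unfolding tau_def rk r_def[symmetric] e
    using g.m_assoc N_G[OF k] N_G[OF m] H_G[OF t] by simp
qed

lemma tau_one: "tau \<one>\<^bsub>Gh\<^esub> = \<one>\<^bsub>G\<^esub>"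
proof -
  have "\<one>\<^bsub>Gh\<^esub> \<in> N" using one_eq subgroup.one_closed[OF subN] by simp
  then have "rr \<one>\<^bsub>Gh\<^esub> = \<one>\<^bsub>Gh\<^esub>" unfolding rr_def by simp
  moreover have "\<one>\<^bsub>Gh\<^esub> \<otimes>\<^bsub>Gh\<^esub> inv\<^bsub>Gh\<^esub> \<one>\<^bsub>Gh\<^esub> = \<one>\<^bsub>Gh\<^esub>" by simp
  ultimately show ?thesis unfolding tau_def tt_def by (simp add: one_eq)
qed

lemma one_N: "\<one>\<^bsub>G\<^esub> \<in> N" using subgroup.one_closed[OF subN] .

lemma dpos: "d > 0"
  using assoc_dpos[OF _ AP one_N] HT unfolding H_triple_def by blast

lemma one_M: "\<one>\<^bsub>G\<lparr>carrier := H\<rparr>\<^esub> \<in> M" using one_N subgroup.one_closed[OF sH] NHM by auto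

lemma dpos': "d' > 0"
  using assoc_dpos[OF _ AP' one_M] HT' unfolding H_triple_def by blast

definition zeta :: "'a \<Rightarrow> complex" where "zeta c = P c $$ (0,0)"

abbreviation "C \<equiv> centralizer_in G N"

lemma Z_scalar: assumes c: "c \<in> C" shows "P c = zeta c \<cdot>\<^sub>m 1\<^sub>m d \<and> P' c = zeta c \<cdot>\<^sub>m 1\<^sub>m d'"
proof -
  obtain z where z: "P c = z \<cdot>\<^sub>m 1\<^sub>m d" "P' c = z \<cdot>\<^sub>m 1\<^sub>m d'" using Ceq c by blast
  have "zeta c = z" unfolding zeta_def z(1) using dpos by simp
  then show ?thesis using z by simp
qed

lemma C_car: "c \<in> C \<Longrightarrow> c \<in> carrier G" using g.centralizer_sub by blast

lemma C_stab: assumes c: "c \<in> C" shows "c \<in> stab G N \<theta>"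
  unfolding stab_def using c C_car g.centralizer_conjg[OF c _ N_sub] by simp

lemma AP_mult: "x \<in> stab G N \<theta> \<Longrightarrow> y \<in> stab G N \<theta> \<Longrightarrow> P x * P y = \<alpha> x y \<cdot>\<^sub>m P (x \<otimes>\<^bsub>G\<^esub> y)"
  using AP unfolding assoc_proj_def by blast

lemma P_one: "P \<one>\<^bsub>G\<^esub> = 1\<^sub>m d"
  using AP unfolding assoc_proj_def is_rep_def by blast

lemma zeta_step: assumes a: "a \<in> C" and c: "c \<in> C"
  shows "zeta a * zeta c = \<alpha> a c * zeta (a \<otimes>\<^bsub>G\<^esub> c)"
proof -
  have ac: "a \<otimes>\<^bsub>G\<^esub> c \<in> C" using g.centralizer_mult[OF a c N_sub] .
  have "P a * P c = (zeta a * zeta c) \<cdot>\<^sub>m 1\<^sub>m d"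
    using Z_scalar[OF a] Z_scalar[OF c]
    by (simp add: mult_smult_assoc_mat[of _ d d _ d] mult_smult_distrib[of _ d d _ d] smult_smult_mat mult.commute)
  moreover have "P a * P c = (\<alpha> a c * zeta (a \<otimes>\<^bsub>G\<^esub> c)) \<cdot>\<^sub>m 1\<^sub>m d"
    using AP_mult[OF C_stab[OF a] C_stab[OF c]] Z_scalar[OF ac] by (simp add: smult_smult_mat)
  ultimately have "(zeta a * zeta c) \<cdot>\<^sub>m (1\<^sub>m d :: complex mat) = (\<alpha> a c * zeta (a \<otimes>\<^bsub>G\<^esub> c)) \<cdot>\<^sub>m 1\<^sub>m d"
    by simp
  then show ?thesis using smult_cancel[of "1\<^sub>m d" d 0 0] dpos by simp
qed

lemma zeta_root: assumes c: "c \<in> C" shows "root_of_unity (zeta c)"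
proof -
  have cc: "c \<in> carrier G" using C_car c .
  have "\<exists>r. root_of_unity r \<and> zeta c ^ j = r * zeta (c [^]\<^bsub>G\<^esub> j)" for j
  proof (induction j)
    case 0
    have "zeta \<one>\<^bsub>G\<^esub> = 1" unfolding zeta_def P_one using dpos by simp
    then show ?case by (intro exI[of _ 1]) (auto simp: root_of_unity_def)
  next
    case (Suc j)
    then obtain r where r: "root_of_unity r" "zeta c ^ j = r * zeta (c [^]\<^bsub>G\<^esub> j)" by blast
    have cj: "c [^]\<^bsub>G\<^esub> j \<in> C" using g.centralizer_pow[OF c N_sub] .
    have st: "zeta (c [^]\<^bsub>G\<^esub> j) * zeta c = \<alpha> (c [^]\<^bsub>G\<^esub> j) c * zeta (c [^]\<^bsub>G\<^esub> Suc j)"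
      using zeta_step[OF cj c] cc by simp
    have ra: "root_of_unity (\<alpha> (c [^]\<^bsub>G\<^esub> j) c)" using roots C_stab cj c by blast
    have "zeta c ^ Suc j = r * \<alpha> (c [^]\<^bsub>G\<^esub> j) c * zeta (c [^]\<^bsub>G\<^esub> Suc j)"
      using r(2) st by (simp add: mult.assoc mult.commute mult.left_commute)
    then show ?case using root_mult[OF r(1) ra] by blast
  qed
  then obtain r where r: "root_of_unity r" "zeta c ^ order G = r * zeta (c [^]\<^bsub>G\<^esub> order G)" by blast
  have "zeta (c [^]\<^bsub>G\<^esub> order G) = 1" unfolding g.pow_order_eq_1[OF cc] zeta_def P_one using dpos by simp
  then have "root_of_unity (zeta c ^ order G)" using r by simp
  moreover have "order G > 0" using fin g.one_closed unfolding order_def by (simp add: card_gt_0_iff) blast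
  ultimately show ?thesis using root_pow by blast
qed

lemma same_act_C: "a \<in> carrier G \<Longrightarrow> b \<in> carrier G \<Longrightarrow> \<forall>n\<in>N. conjg G a n = conjg G b n \<Longrightarrow>
  inv\<^bsub>G\<^esub> a \<otimes>\<^bsub>G\<^esub> b \<in> C"
  using g.same_action_centralizer[OF _ _ N_sub] by blast

lemma Z1: assumes x: "x \<in> carrier Gh" and y: "y \<in> carrier Gh"
  shows "inv\<^bsub>G\<^esub> (tau x \<otimes>\<^bsub>G\<^esub> tau y) \<otimes>\<^bsub>G\<^esub> tau (x \<otimes>\<^bsub>Gh\<^esub> y) \<in> C"
proof (rule same_act_C)
  show "tau x \<otimes>\<^bsub>G\<^esub> tau y \<in> carrier G" using tau_car x y by simp
  show "tau (x \<otimes>\<^bsub>Gh\<^esub> y) \<in> carrier G" using tau_car x y by simp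
  show "\<forall>n\<in>N. conjg G (tau x \<otimes>\<^bsub>G\<^esub> tau y) n = conjg G (tau (x \<otimes>\<^bsub>Gh\<^esub> y)) n"
  proof
    fix n assume n: "n \<in> N"
    have "conjg G (tau x \<otimes>\<^bsub>G\<^esub> tau y) n = conjg G (tau x) (conjg G (tau y) n)"
      using g.conjg_mult tau_car x y N_G n by blast
    also have "\<dots> = conjg Gh x (conjg Gh y n)" using tau_conj x y n conjNh by simp
    also have "\<dots> = conjg Gh (x \<otimes>\<^bsub>Gh\<^esub> y) n" using h.conjg_mult x y N_Gh n by simp
    also have "\<dots> = conjg G (tau (x \<otimes>\<^bsub>Gh\<^esub> y)) n" using tau_conj x y n by simp
    finally show "conjg G (tau x \<otimes>\<^bsub>G\<^esub> tau y) n = conjg G (tau (x \<otimes>\<^bsub>Gh\<^esub> y)) n" .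
  qed
qed

lemma Z2: assumes y: "y \<in> carrier G" shows "\<exists>yh\<in>carrier Gh. inv\<^bsub>G\<^esub> y \<otimes>\<^bsub>G\<^esub> tau yh \<in> C"
proof -
  obtain yh where yh: "yh \<in> carrier Gh" and a: "\<forall>n\<in>N. conjg Gh yh n = conjg G y n" using act_Gh y by blast
  have "inv\<^bsub>G\<^esub> y \<otimes>\<^bsub>G\<^esub> tau yh \<in> C" using same_act_C y tau_car[OF yh] a tau_conj[OF yh] by simp
  then show ?thesis using yh by blast
qed

lemma Z3: assumes x: "x \<in> carrier Gh" and y: "y \<in> carrier G" and yh: "yh \<in> carrier Gh"
  and c: "inv\<^bsub>G\<^esub> y \<otimes>\<^bsub>G\<^esub> tau yh \<in> C"
  shows "inv\<^bsub>G\<^esub> (conjg G (tau x) y) \<otimes>\<^bsub>G\<^esub> tau (conjg Gh x yh) \<in> C"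
proof (rule same_act_C)
  have tx: "tau x \<in> carrier G" using tau_car x .
  have ty: "tau yh \<in> carrier G" using tau_car yh .
  show "conjg G (tau x) y \<in> carrier G" using tx y by simp
  show "tau (conjg Gh x yh) \<in> carrier G" using tau_car x yh by simp
  have yact: "conjg G y m = conjg Gh yh m" if m: "m \<in> N" for m
  proof -
    have "tau yh = y \<otimes>\<^bsub>G\<^esub> (inv\<^bsub>G\<^esub> y \<otimes>\<^bsub>G\<^esub> tau yh)" using y ty by (simp add: g.m_assoc[symmetric])
    then have "conjg G (tau yh) m = conjg G y (conjg G (inv\<^bsub>G\<^esub> y \<otimes>\<^bsub>G\<^esub> tau yh) m)"
      using g.conjg_mult y C_car[OF c] N_G[OF m] by metis
    also have "\<dots> = conjg G y m" using g.centralizer_conjg[OF c m N_sub] by simp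
    finally show ?thesis using tau_conj[OF yh m] by simp
  qed
  have xinv: "conjg G (inv\<^bsub>G\<^esub> (tau x)) n = conjg Gh (inv\<^bsub>Gh\<^esub> x) n" if n: "n \<in> N" for n
  proof -
    define m where "m = conjg Gh (inv\<^bsub>Gh\<^esub> x) n"
    have m: "m \<in> N" unfolding m_def using conjNh x n by simp
    have "conjg Gh x m = n" unfolding m_def using x N_Gh[OF n] by simp
    then have "conjg G (tau x) m = n" using tau_conj[OF x m] by simp
    then have "conjg G (inv\<^bsub>G\<^esub> (tau x)) n = m" using tx N_G[OF m] by (metis g.conjg_inv_cancel)
    then show ?thesis unfolding m_def .
  qed
  show "\<forall>n\<in>N. conjg G (conjg G (tau x) y) n = conjg G (tau (conjg Gh x yh)) n"
  proof
    fix n assume n: "n \<in> N"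
    have m1: "conjg Gh (inv\<^bsub>Gh\<^esub> x) n \<in> N" using conjNh x n by simp
    have m2: "conjg Gh yh (conjg Gh (inv\<^bsub>Gh\<^esub> x) n) \<in> N" using conjNh yh m1 by simp
    have "conjg G (conjg G (tau x) y) n = conjg G (tau x) (conjg G y (conjg G (inv\<^bsub>G\<^esub> (tau x)) n))"
      using g.conjg_conjg tx y N_G[OF n] by blast
    also have "\<dots> = conjg Gh x (conjg Gh yh (conjg Gh (inv\<^bsub>Gh\<^esub> x) n))"
      using xinv[OF n] yact[OF m1] tau_conj[OF x m2] by simp
    also have "\<dots> = conjg Gh (conjg Gh x yh) n" using h.conjg_conjg x yh N_Gh[OF n] by simp
    also have "\<dots> = conjg G (tau (conjg Gh x yh)) n" using tau_conj x yh n by simp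
    finally show "conjg G (conjg G (tau x) y) n = conjg G (tau (conjg Gh x yh)) n" .
  qed
qed

lemma xfer_main: "xfer G Gh N \<theta> d P \<alpha> tau C zeta"
proof (intro xfer.intro xfer_axioms.intro)
  show "group G" "group Gh" by (rule g.group_axioms, rule h.group_axioms)
  show "N \<lhd> G" by (rule NG)
  show "N \<lhd> Gh" by (rule NGh)
  show "\<forall>a\<in>N. \<forall>b\<in>N. a \<otimes>\<^bsub>Gh\<^esub> b = a \<otimes>\<^bsub>G\<^esub> b" by (rule mult_eq)
  show "assoc_proj G N \<theta> d P \<alpha>" by (rule AP)
  show "\<forall>x\<in>stab G N \<theta>. \<forall>y\<in>stab G N \<theta>. root_of_unity (\<alpha> x y)" by (rule roots)
  show "d > 0" by (rule dpos)
  show "\<And>g. g \<in> carrier Gh \<Longrightarrow> tau g \<in> carrier G" by (rule tau_car)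
  show "\<And>g k. g \<in> carrier Gh \<Longrightarrow> k \<in> N \<Longrightarrow> conjg G (tau g) k = conjg Gh g k" by (rule tau_conj)
  show "\<And>g k. k \<in> N \<Longrightarrow> g \<in> carrier Gh \<Longrightarrow> tau (k \<otimes>\<^bsub>Gh\<^esub> g) = k \<otimes>\<^bsub>G\<^esub> tau g" by (rule tau_left)
  show "tau \<one>\<^bsub>Gh\<^esub> = \<one>\<^bsub>G\<^esub>" by (rule tau_one)
  show "C \<subseteq> carrier G" by (rule g.centralizer_sub)
  show "\<one>\<^bsub>G\<^esub> \<in> C" by (rule g.centralizer_one[OF N_sub])
  show "\<And>c k. c \<in> C \<Longrightarrow> k \<in> N \<Longrightarrow> conjg G c k = k" using g.centralizer_conjg N_sub by blast
  show "\<And>c. c \<in> C \<Longrightarrow> P c = zeta c \<cdot>\<^sub>m 1\<^sub>m d \<and> root_of_unity (zeta c)" using Z_scalar zeta_root by blast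
  show "\<And>x y. x \<in> carrier Gh \<Longrightarrow> y \<in> carrier Gh \<Longrightarrow>
       inv\<^bsub>G\<^esub> (tau x \<otimes>\<^bsub>G\<^esub> tau y) \<otimes>\<^bsub>G\<^esub> tau (x \<otimes>\<^bsub>Gh\<^esub> y) \<in> C" by (rule Z1)
  show "\<And>y. y \<in> carrier G \<Longrightarrow> \<exists>yh\<in>carrier Gh. inv\<^bsub>G\<^esub> y \<otimes>\<^bsub>G\<^esub> tau yh \<in> C" by (rule Z2)
  show "\<And>x y yh. x \<in> carrier Gh \<Longrightarrow> y \<in> carrier G \<Longrightarrow> yh \<in> carrier Gh \<Longrightarrow>
       inv\<^bsub>G\<^esub> y \<otimes>\<^bsub>G\<^esub> tau yh \<in> C \<Longrightarrow>
       inv\<^bsub>G\<^esub> (conjg G (tau x) y) \<otimes>\<^bsub>G\<^esub> tau (conjg Gh x yh) \<in> C" by (rule Z3)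
qed

abbreviation "GH \<equiv> G\<lparr>carrier := H\<rparr>"
abbreviation "GHh \<equiv> Gh\<lparr>carrier := Hh\<rparr>"

lemma grpGH: "group GH" using subgroup.subgroup_is_group[OF sH g.group_axioms] .
lemma grpGHh: "group GHh" using subgroup.subgroup_is_group[OF sHh h.group_axioms] .
lemma MGH: "M \<lhd> GH" using HT' unfolding H_triple_def by blast
lemma subMh: "subgroup M Gh" using h.subgroups_Inter_pair[OF subNh sHh] NHh by simp

lemma MGHh: "M \<lhd> GHh"
proof -
  have "subgroup M GHh" using h.subgroup_incl[OF subMh sHh M_Hh] .
  moreover have "\<forall>x\<in>carrier GHh. \<forall>m\<in>M. x \<otimes>\<^bsub>GHh\<^esub> m \<otimes>\<^bsub>GHh\<^esub> inv\<^bsub>GHh\<^esub> x \<in> M"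
  proof (intro ballI)
    fix x m assume x: "x \<in> carrier GHh" and m: "m \<in> M"
    have xh: "x \<in> Hh" using x by simp
    have e: "x \<otimes>\<^bsub>GHh\<^esub> m \<otimes>\<^bsub>GHh\<^esub> inv\<^bsub>GHh\<^esub> x = conjg Gh x m"
      unfolding conjg_def using h.m_inv_consistent[OF sHh xh] by simp
    have "conjg Gh x m \<in> N" using conjNh Hh_Gh[OF xh] m M_N by blast
    moreover have "conjg Gh x m \<in> Hh" unfolding conjg_def
      using subgroup.m_closed[OF sHh subgroup.m_closed[OF sHh xh] subgroup.m_inv_closed[OF sHh xh]] m M_Hh by blast
    ultimately show "x \<otimes>\<^bsub>GHh\<^esub> m \<otimes>\<^bsub>GHh\<^esub> inv\<^bsub>GHh\<^esub> x \<in> M" unfolding e using NHh by blast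
  qed
  ultimately show ?thesis using group.normal_inv_iff[OF grpGHh] by blast
qed

lemma conjGH: "x \<in> H \<Longrightarrow> conjg GH x y = conjg G x y"
  using conjg_restr[OF g.group_axioms sH] .
lemma conjGHh: "x \<in> Hh \<Longrightarrow> conjg GHh x y = conjg Gh x y"
  using conjg_restr[OF h.group_axioms sHh] .
lemma invGH: "x \<in> H \<Longrightarrow> inv\<^bsub>GH\<^esub> x = inv\<^bsub>G\<^esub> x"
  using g.m_inv_consistent[OF sH] .

lemma xfer_prime: "xfer GH GHh M \<phi> d' P' \<alpha>' tau C zeta"
proof (intro xfer.intro xfer_axioms.intro)
  show "group GH" by (rule grpGH)
  show "group GHh" by (rule grpGHh)
  show "M \<lhd> GH" by (rule MGH)
  show "M \<lhd> GHh" by (rule MGHh)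
  show "\<forall>a\<in>M. \<forall>b\<in>M. a \<otimes>\<^bsub>GHh\<^esub> b = a \<otimes>\<^bsub>GH\<^esub> b"
  proof (intro ballI)
    fix a b assume "a \<in> M" "b \<in> M"
    then have "a \<in> N" "b \<in> N" using M_N by auto
    then show "a \<otimes>\<^bsub>GHh\<^esub> b = a \<otimes>\<^bsub>GH\<^esub> b" using mult_eq' by simp
  qed
  show "assoc_proj GH M \<phi> d' P' \<alpha>'" by (rule AP')
  show "\<forall>x\<in>stab GH M \<phi>. \<forall>y\<in>stab GH M \<phi>. root_of_unity (\<alpha>' x y)" by (rule roots')
  show "d' > 0" by (rule dpos')
  show "\<And>g. g \<in> carrier GHh \<Longrightarrow> tau g \<in> carrier GH" using tau_H by simp
  show "conjg GH (tau g) k = conjg GHh g k" if "g \<in> carrier GHh" "k \<in> M" for g k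
  proof -
    have g: "g \<in> Hh" using that by simp
    have k: "k \<in> N" using that M_N by blast
    show ?thesis unfolding conjGH[OF tau_H[OF g]] conjGHh[OF g] using tau_conj[OF Hh_Gh[OF g] k] .
  qed
  show "tau (k \<otimes>\<^bsub>GHh\<^esub> g) = k \<otimes>\<^bsub>GH\<^esub> tau g" if "k \<in> M" "g \<in> carrier GHh" for g k
  proof -
    have g: "g \<in> Hh" using that by simp
    have k: "k \<in> N" using that M_N by blast
    show ?thesis using tau_left[OF k Hh_Gh[OF g]] by simp
  qed
  show "tau \<one>\<^bsub>GHh\<^esub> = \<one>\<^bsub>GH\<^esub>" using tau_one by simp
  show "C \<subseteq> carrier GH" using CH by simp
  show "\<one>\<^bsub>GH\<^esub> \<in> C" using g.centralizer_one[OF N_sub] by simp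
  show "conjg GH c k = k" if "c \<in> C" "k \<in> M" for c k
  proof -
    have cH: "c \<in> H" using that CH by blast
    have k: "k \<in> N" using that M_N by blast
    show ?thesis unfolding conjGH[OF cH] using g.centralizer_conjg[OF that(1) k N_sub] .
  qed
  show "\<And>c. c \<in> C \<Longrightarrow> P' c = zeta c \<cdot>\<^sub>m 1\<^sub>m d' \<and> root_of_unity (zeta c)" using Z_scalar zeta_root by blast
  show "\<And>x y. x \<in> carrier GHh \<Longrightarrow> y \<in> carrier GHh \<Longrightarrow>
       inv\<^bsub>GH\<^esub> (tau x \<otimes>\<^bsub>GH\<^esub> tau y) \<otimes>\<^bsub>GH\<^esub> tau (x \<otimes>\<^bsub>GHh\<^esub> y) \<in> C"
  proof -
    fix x y assume x: "x \<in> carrier GHh" and y: "y \<in> carrier GHh"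
    have "tau x \<otimes>\<^bsub>G\<^esub> tau y \<in> H" using subgroup.m_closed[OF sH] tau_H x y by simp
    then show "inv\<^bsub>GH\<^esub> (tau x \<otimes>\<^bsub>GH\<^esub> tau y) \<otimes>\<^bsub>GH\<^esub> tau (x \<otimes>\<^bsub>GHh\<^esub> y) \<in> C"
      using invGH Z1 Hh_Gh x y by simp
  qed
  show "\<And>y. y \<in> carrier GH \<Longrightarrow> \<exists>yh\<in>carrier GHh. inv\<^bsub>GH\<^esub> y \<otimes>\<^bsub>GH\<^esub> tau yh \<in> C"
  proof -
    fix y assume y: "y \<in> carrier GH"
    then have yH: "y \<in> H" by simp
    obtain yh where yh: "yh \<in> Hh" and a: "\<forall>n\<in>N. conjg Gh yh n = conjg G y n" using act_Hh yH by blast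
    have "inv\<^bsub>G\<^esub> y \<otimes>\<^bsub>G\<^esub> tau yh \<in> C"
      using same_act_C H_G[OF yH] tau_car[OF Hh_Gh[OF yh]] a tau_conj[OF Hh_Gh[OF yh]] by simp
    then show "\<exists>yh\<in>carrier GHh. inv\<^bsub>GH\<^esub> y \<otimes>\<^bsub>GH\<^esub> tau yh \<in> C" using yh invGH[OF yH] by auto
  qed
  show "\<And>x y yh. x \<in> carrier GHh \<Longrightarrow> y \<in> carrier GH \<Longrightarrow> yh \<in> carrier GHh \<Longrightarrow>
       inv\<^bsub>GH\<^esub> y \<otimes>\<^bsub>GH\<^esub> tau yh \<in> C \<Longrightarrow>
       inv\<^bsub>GH\<^esub> (conjg GH (tau x) y) \<otimes>\<^bsub>GH\<^esub> tau (conjg GHh x yh) \<in> C"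
  proof -
    fix x y yh assume x: "x \<in> carrier GHh" and y: "y \<in> carrier GH" and yh: "yh \<in> carrier GHh"
      and c: "inv\<^bsub>GH\<^esub> y \<otimes>\<^bsub>GH\<^esub> tau yh \<in> C"
    have xH: "x \<in> Hh" "y \<in> H" "yh \<in> Hh" using x y yh by auto
    have tx: "tau x \<in> H" using tau_H xH(1) .
    have cj: "conjg G (tau x) y \<in> H" unfolding conjg_def
      using subgroup.m_closed[OF sH subgroup.m_closed[OF sH tx xH(2)] subgroup.m_inv_closed[OF sH tx]] .
    have c': "inv\<^bsub>G\<^esub> y \<otimes>\<^bsub>G\<^esub> tau yh \<in> C" using c invGH[OF xH(2)] by simp
    have "inv\<^bsub>G\<^esub> (conjg G (tau x) y) \<otimes>\<^bsub>G\<^esub> tau (conjg Gh x yh) \<in> C"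
      using Z3[OF Hh_Gh[OF xH(1)] H_G[OF xH(2)] Hh_Gh[OF xH(3)] c'] .
    then show "inv\<^bsub>GH\<^esub> (conjg GH (tau x) y) \<otimes>\<^bsub>GH\<^esub> tau (conjg GHh x yh) \<in> C"
      using conjGH[OF tx] conjGHh[OF xH(1)] invGH[OF cj] by simp
  qed
qed

lemma is_rep_transfer:
  assumes "\<one>\<^bsub>A\<^esub> = \<one>\<^bsub>B\<^esub>" "\<forall>a\<in>K. \<forall>b\<in>K. a \<otimes>\<^bsub>A\<^esub> b = a \<otimes>\<^bsub>B\<^esub> b"
  shows "irr_char A K f = irr_char B K f"
proof -
  have "is_rep A K e \<rho> = is_rep B K e \<rho>" for e \<rho> unfolding is_rep_def using assms by simp
  then show ?thesis unfolding irr_char_def irreducible_rep_def by simp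
qed

lemma id_calH: "id \<in> calH p"
  unfolding calH_def galQab_def by (auto intro!: exI[of _ 0])

lemma calH_gal: "\<sigma> \<in> calH p \<Longrightarrow> \<sigma> \<in> galQab" unfolding calH_def by simp

lemma irrh: "irr_char Gh N \<theta>"
  using HT is_rep_transfer[of G Gh N] one_eq mult_eq unfolding H_triple_def by simp

lemma HTh: "H_triple p Gh N \<theta>"
  unfolding H_triple_def
proof (intro conjI ballI)
  show "N \<lhd> Gh" by (rule NGh)
  show "irr_char Gh N \<theta>" by (rule irrh)
  fix g assume g: "g \<in> carrier Gh"
  obtain \<sigma> where "\<sigma> \<in> calH p" "\<forall>n\<in>N. \<theta> (conjg G (tau g) n) = \<sigma> (\<theta> n)"
    using HT tau_car[OF g] unfolding H_triple_def by blast
  then show "\<exists>\<sigma>\<in>calH p. \<forall>n\<in>N. \<theta> (conjg Gh g n) = \<sigma> (\<theta> n)" using tau_conj[OF g] by auto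
qed

lemma HTh': "H_triple p GHh M \<phi>"
  unfolding H_triple_def
proof (intro conjI ballI)
  show "M \<lhd> GHh" by (rule MGHh)
  have "\<forall>a\<in>M. \<forall>b\<in>M. a \<otimes>\<^bsub>GH\<^esub> b = a \<otimes>\<^bsub>GHh\<^esub> b"
  proof (intro ballI)
    fix a b assume "a \<in> M" "b \<in> M"
    then have "a \<in> N" "b \<in> N" using M_N by auto
    then show "a \<otimes>\<^bsub>GH\<^esub> b = a \<otimes>\<^bsub>GHh\<^esub> b" using mult_eq' by simp
  qed
  then show "irr_char GHh M \<phi>"
    using HT' is_rep_transfer[of GH GHh M] one_eq unfolding H_triple_def by simp
  fix g assume g: "g \<in> carrier GHh"
  then have gH: "g \<in> Hh" by simp
  obtain \<sigma> where "\<sigma> \<in> calH p" "\<forall>n\<in>M. \<phi> (conjg GH (tau g) n) = \<sigma> (\<phi> n)"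
    using HT' tau_H[OF gH] unfolding H_triple_def by auto
  moreover have "\<forall>n\<in>M. conjg G (tau g) n = conjg Gh g n" using tau_conj[OF Hh_Gh[OF gH]] M_N by blast
  ultimately show "\<exists>\<sigma>\<in>calH p. \<forall>n\<in>M. \<phi> (conjg GHh g n) = \<sigma> (\<phi> n)"
    unfolding conjGH[OF tau_H[OF gH]] conjGHh[OF gH] by auto
qed

lemma sp_N: "h \<in> Hh \<Longrightarrow> (h, \<sigma>) \<in> stab_pairs p Hh Gh N \<theta> \<longleftrightarrow> (tau h, \<sigma>) \<in> stab_pairs p H G N \<theta>"
  unfolding stab_pairs_def using tau_H tau_conj Hh_Gh by simp
lemma sp_M: assumes h: "h \<in> Hh"
  shows "(h, \<sigma>) \<in> stab_pairs p Hh Gh M \<phi> \<longleftrightarrow> (tau h, \<sigma>) \<in> stab_pairs p H G M \<phi>"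
proof -
  have "\<forall>n\<in>M. conjg G (tau h) n = conjg Gh h n" using tau_conj[OF Hh_Gh[OF h]] M_N by blast
  then show ?thesis unfolding stab_pairs_def using tau_H[OF h] h by simp
qed

lemma SPh: "stab_pairs p Hh Gh N \<theta> = stab_pairs p Hh Gh M \<phi>"
proof -
  have "(h, \<sigma>) \<in> stab_pairs p Hh Gh N \<theta> \<longleftrightarrow> (h, \<sigma>) \<in> stab_pairs p Hh Gh M \<phi>" for h \<sigma>
  proof (cases "h \<in> Hh")
    case True
    then show ?thesis using sp_N[OF True] sp_M[OF True] SP by simp
  next
    case False
    then show ?thesis unfolding stab_pairs_def by simp
  qed
  then show ?thesis by auto
qed

lemma vH: "x \<in> Hh \<Longrightarrow> y \<in> Hh \<Longrightarrow> conjg G (tau x) (tau y) \<in> H"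
  unfolding conjg_def using subgroup.m_closed[OF sH subgroup.m_closed[OF sH] subgroup.m_inv_closed[OF sH]] tau_H by blast

lemma zeta_one: "zeta \<one>\<^bsub>G\<^esub> = 1" unfolding zeta_def P_one using dpos by simp

lemma main_result: "geq_c p Gh N \<theta> Hh M \<phi>"
proof -
  have XM: "xfer G Gh N \<theta> d P \<alpha> tau C zeta" by (rule xfer_main)
  have XP: "xfer GH GHh M \<phi> d' P' \<alpha>' tau C zeta" by (rule xfer_prime)
  define Ph1 where "Ph1 = (\<lambda>g. P (tau g))"
  define al1 where "al1 = (\<lambda>x y. \<alpha> (tau x) (tau y) * \<alpha> (tau x \<otimes>\<^bsub>G\<^esub> tau y) (inv\<^bsub>G\<^esub> (tau x \<otimes>\<^bsub>G\<^esub> tau y) \<otimes>\<^bsub>G\<^esub> tau (x \<otimes>\<^bsub>Gh\<^esub> y))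
   / zeta (inv\<^bsub>G\<^esub> (tau x \<otimes>\<^bsub>G\<^esub> tau y) \<otimes>\<^bsub>G\<^esub> tau (x \<otimes>\<^bsub>Gh\<^esub> y)))"
  define Ph2 where "Ph2 = (\<lambda>g. P' (tau g))"
  define al2 where "al2 = (\<lambda>x y. \<alpha>' (tau x) (tau y) * \<alpha>' (tau x \<otimes>\<^bsub>GH\<^esub> tau y) (inv\<^bsub>GH\<^esub> (tau x \<otimes>\<^bsub>GH\<^esub> tau y) \<otimes>\<^bsub>GH\<^esub> tau (x \<otimes>\<^bsub>GHh\<^esub> y))
   / zeta (inv\<^bsub>GH\<^esub> (tau x \<otimes>\<^bsub>GH\<^esub> tau y) \<otimes>\<^bsub>GH\<^esub> tau (x \<otimes>\<^bsub>GHh\<^esub> y)))"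
  have A1: "assoc_proj Gh N \<theta> d Ph1 al1"
    using xfer.Ph_assoc[OF XM] unfolding xfer.Ph_eq[OF XM] xfer.alphah_eq[OF XM] Ph1_def al1_def .
  have A2: "assoc_proj GHh M \<phi> d' Ph2 al2"
    using xfer.Ph_assoc[OF XP] unfolding xfer.Ph_eq[OF XP] xfer.alphah_eq[OF XP] Ph2_def al2_def .
  have R1: "\<forall>x\<in>stab Gh N \<theta>. \<forall>y\<in>stab Gh N \<theta>. root_of_unity (al1 x y)"
    using xfer.alphah_root[OF XM] unfolding xfer.alphah_eq[OF XM] al1_def by blast
  have R2: "\<forall>x\<in>stab GHh M \<phi>. \<forall>y\<in>stab GHh M \<phi>. root_of_unity (al2 x y)"
    using xfer.alphah_root[OF XP] unfolding xfer.alphah_eq[OF XP] al2_def by blast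
  have tstab: "tau y \<in> H \<inter> stab G N \<theta>" if "y \<in> Hh \<inter> stab Gh N \<theta>" for y
    using that tau_H xfer.tau_stab[OF XM] Hh_Gh by blast
  have E: "\<forall>x\<in>Hh \<inter> stab Gh N \<theta>. \<forall>y\<in>Hh \<inter> stab Gh N \<theta>. al1 x y = al2 x y"
  proof (intro ballI)
    fix x y assume x: "x \<in> Hh \<inter> stab Gh N \<theta>" and y: "y \<in> Hh \<inter> stab Gh N \<theta>"
    have tx: "tau x \<in> H \<inter> stab G N \<theta>" using tstab x by blast
    have ty: "tau y \<in> H \<inter> stab G N \<theta>" using tstab y by blast
    have txy: "tau x \<otimes>\<^bsub>G\<^esub> tau y \<in> H \<inter> stab G N \<theta>"
      using subgroup.m_closed[OF sH] xfer.S_mult[OF XM] tx ty by blast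
    define c where "c = inv\<^bsub>G\<^esub> (tau x \<otimes>\<^bsub>G\<^esub> tau y) \<otimes>\<^bsub>G\<^esub> tau (x \<otimes>\<^bsub>Gh\<^esub> y)"
    have cC: "c \<in> C" unfolding c_def using Z1 Hh_Gh x y by blast
    have cH: "c \<in> H \<inter> stab G N \<theta>" using cC CH C_stab by blast
    have e2: "al2 x y = \<alpha>' (tau x) (tau y) * \<alpha>' (tau x \<otimes>\<^bsub>G\<^esub> tau y) c / zeta c"
      unfolding al2_def c_def using invGH txy by simp
    have e1: "al1 x y = \<alpha> (tau x) (tau y) * \<alpha> (tau x \<otimes>\<^bsub>G\<^esub> tau y) c / zeta c"
      unfolding al1_def c_def by simp
    show "al1 x y = al2 x y" unfolding e1 e2 using aeq tx ty txy cH by simp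
  qed
  have CC: "\<forall>c\<in>centralizer_in Gh N. \<exists>\<zeta>. Ph1 c = \<zeta> \<cdot>\<^sub>m 1\<^sub>m d \<and> Ph2 c = \<zeta> \<cdot>\<^sub>m 1\<^sub>m d'"
  proof
    fix c assume c: "c \<in> centralizer_in Gh N"
    have cc: "c \<in> carrier Gh" using c h.centralizer_sub by blast
    have "\<forall>n\<in>N. conjg G \<one>\<^bsub>G\<^esub> n = conjg G (tau c) n"
      using tau_conj[OF cc] h.centralizer_conjg[OF c _ N_subh] N_G by simp
    then have "inv\<^bsub>G\<^esub> \<one>\<^bsub>G\<^esub> \<otimes>\<^bsub>G\<^esub> tau c \<in> C" using same_act_C[OF g.one_closed tau_car[OF cc]] by blast
    then have "tau c \<in> C" using tau_car[OF cc] by simp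
    then show "\<exists>\<zeta>. Ph1 c = \<zeta> \<cdot>\<^sub>m 1\<^sub>m d \<and> Ph2 c = \<zeta> \<cdot>\<^sub>m 1\<^sub>m d'"
      unfolding Ph1_def Ph2_def using Z_scalar by blast
  qed
  have MU: "\<forall>(x, \<sigma>)\<in>stab_pairs p Hh Gh N \<theta>. \<forall>\<mu> \<mu>'.
            is_mu Gh N \<theta> d Ph1 x \<sigma> \<mu> \<longrightarrow> is_mu GHh M \<phi> d' Ph2 x \<sigma> \<mu>' \<longrightarrow>
            (\<forall>y\<in>Hh \<inter> stab Gh N \<theta>. \<mu> y = \<mu>' y)"
  proof (intro ballI allI impI, clarify)
    fix x \<sigma> \<mu> \<mu>' y
    assume xs: "(x, \<sigma>) \<in> stab_pairs p Hh Gh N \<theta>" and m1: "is_mu Gh N \<theta> d Ph1 x \<sigma> \<mu>"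
      and m2: "is_mu GHh M \<phi> d' Ph2 x \<sigma> \<mu>'" and yH: "y \<in> Hh" and yS: "y \<in> stab Gh N \<theta>"
    have x: "x \<in> Hh" and sH': "\<sigma> \<in> calH p" and hx: "\<forall>n\<in>N. \<sigma> (\<theta> (conjg Gh x n)) = \<theta> n"
      using xs unfolding stab_pairs_def by auto
    have xc: "x \<in> carrier Gh" using Hh_Gh x .
    have sg: "\<sigma> \<in> galQab" using calH_gal sH' .
    have ht1: "\<forall>k\<in>N. \<sigma> (\<theta> (conjg G (tau x) k)) = \<theta> k" using hx tau_conj[OF xc] by simp
    obtain \<mu>0 where i0: "is_mu G N \<theta> d P (tau x) \<sigma> \<mu>0" and r0: "\<forall>yh\<in>stab Gh N \<theta>. conjg G (tau x) (tau yh) \<in> stab G N \<theta> \<and>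
       inv\<^bsub>G\<^esub> (conjg G (tau x) (tau yh)) \<otimes>\<^bsub>G\<^esub> tau (conjg Gh x yh) \<in> C \<and>
       \<sigma> (zeta (inv\<^bsub>G\<^esub> (conjg G (tau x) (tau yh)) \<otimes>\<^bsub>G\<^esub> tau (conjg Gh x yh))) * \<mu>0 (tau yh) =
       \<sigma> (\<alpha> (conjg G (tau x) (tau yh)) (inv\<^bsub>G\<^esub> (conjg G (tau x) (tau yh)) \<otimes>\<^bsub>G\<^esub> tau (conjg Gh x yh)))
         * \<mu> yh * (zeta \<one>\<^bsub>G\<^esub> / \<alpha> (tau yh) \<one>\<^bsub>G\<^esub>)"
      using xfer.mu_transfer[OF XM, unfolded xfer.Ph_eq[OF XM], OF xc sg ht1 m1[unfolded Ph1_def]] by blast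
    have sp: "(tau x, \<sigma>) \<in> stab_pairs p H G N \<theta>" using sp_N[OF x] xs by simp
    then have "(tau x, \<sigma>) \<in> stab_pairs p H G M \<phi>" using SP by simp
    then have "\<forall>k\<in>M. \<sigma> (\<phi> (conjg G (tau x) k)) = \<phi> k" unfolding stab_pairs_def by simp
    then have ht2: "\<forall>k\<in>M. \<sigma> (\<phi> (conjg GH (tau x) k)) = \<phi> k" using conjGH[OF tau_H[OF x]] by simp
    have xc2: "x \<in> carrier GHh" using x by simp
    obtain \<mu>1 where i1: "is_mu GH M \<phi> d' P' (tau x) \<sigma> \<mu>1" and r1: "\<forall>yh\<in>stab GHh M \<phi>. conjg GH (tau x) (tau yh) \<in> stab GH M \<phi> \<and>
       inv\<^bsub>GH\<^esub> (conjg GH (tau x) (tau yh)) \<otimes>\<^bsub>GH\<^esub> tau (conjg GHh x yh) \<in> C \<and>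
       \<sigma> (zeta (inv\<^bsub>GH\<^esub> (conjg GH (tau x) (tau yh)) \<otimes>\<^bsub>GH\<^esub> tau (conjg GHh x yh))) * \<mu>1 (tau yh) =
       \<sigma> (\<alpha>' (conjg GH (tau x) (tau yh)) (inv\<^bsub>GH\<^esub> (conjg GH (tau x) (tau yh)) \<otimes>\<^bsub>GH\<^esub> tau (conjg GHh x yh)))
         * \<mu>' yh * (zeta \<one>\<^bsub>GH\<^esub> / \<alpha>' (tau yh) \<one>\<^bsub>GH\<^esub>)"
      using xfer.mu_transfer[OF XP, unfolded xfer.Ph_eq[OF XP], OF xc2 sg ht2 m2[unfolded Ph2_def]] by blast
    have meq: "\<forall>y\<in>H \<inter> stab G N \<theta>. \<mu>0 y = \<mu>1 y" using mueq sp i0 i1 by blast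
    have yc: "y \<in> carrier Gh" using Hh_Gh yH .
    have ty: "tau y \<in> H \<inter> stab G N \<theta>" using tstab yH yS by blast
    have "(tau y, id) \<in> stab_pairs p H G N \<theta>" using ty id_calH unfolding stab_pairs_def stab_def by simp
    then have "(tau y, id) \<in> stab_pairs p H G M \<phi>" using SP by simp
    then have "\<forall>m\<in>M. \<phi> (conjg G (tau y) m) = \<phi> m" unfolding stab_pairs_def by simp
    moreover have "\<forall>m\<in>M. conjg G (tau y) m = conjg GHh y m"
      using tau_conj[OF yc] conjGHh[OF yH] M_N by auto
    ultimately have yM: "y \<in> stab GHh M \<phi>" unfolding stab_def using yH by simp
    define v where "v = conjg G (tau x) (tau y)"
    define c1 where "c1 = inv\<^bsub>G\<^esub> v \<otimes>\<^bsub>G\<^esub> tau (conjg Gh x y)"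
    have vH: "v \<in> H" unfolding v_def using vH x yH .
    have vS: "v \<in> stab G N \<theta>" and c1C: "c1 \<in> C"
      and eq0: "\<sigma> (zeta c1) * \<mu>0 (tau y) = \<sigma> (\<alpha> v c1) * \<mu> y * (zeta \<one>\<^bsub>G\<^esub> / \<alpha> (tau y) \<one>\<^bsub>G\<^esub>)"
      using r0 yS unfolding v_def c1_def by auto
    have ev: "conjg GH (tau x) (tau y) = v" unfolding v_def using conjGH[OF tau_H[OF x]] .
    have ec: "conjg GHh x y = conjg Gh x y" using conjGHh[OF x] .
    have r1y: "\<sigma> (zeta (inv\<^bsub>GH\<^esub> (conjg GH (tau x) (tau y)) \<otimes>\<^bsub>GH\<^esub> tau (conjg GHh x y))) * \<mu>1 (tau y) =
       \<sigma> (\<alpha>' (conjg GH (tau x) (tau y)) (inv\<^bsub>GH\<^esub> (conjg GH (tau x) (tau y)) \<otimes>\<^bsub>GH\<^esub> tau (conjg GHh x y)))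
         * \<mu>' y * (zeta \<one>\<^bsub>GH\<^esub> / \<alpha>' (tau y) \<one>\<^bsub>GH\<^esub>)"
      using bspec[OF r1 yM] by blast
    have eq1: "\<sigma> (zeta c1) * \<mu>1 (tau y) = \<sigma> (\<alpha>' v c1) * \<mu>' y * (zeta \<one>\<^bsub>G\<^esub> / \<alpha>' (tau y) \<one>\<^bsub>G\<^esub>)"
      using r1y unfolding ev ec invGH[OF vH] c1_def by simp
    have c1H: "c1 \<in> H \<inter> stab G N \<theta>" using c1C CH C_stab by blast
    have oneH: "\<one>\<^bsub>G\<^esub> \<in> H \<inter> stab G N \<theta>" using subgroup.one_closed[OF sH] xfer.S_one[OF XM] by simp
    have a1: "\<alpha> v c1 = \<alpha>' v c1" using aeq vH vS c1H by blast
    have a2: "\<alpha> (tau y) \<one>\<^bsub>G\<^esub> = \<alpha>' (tau y) \<one>\<^bsub>G\<^esub>" using aeq ty oneH by blast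
    have m0: "\<mu>0 (tau y) = \<mu>1 (tau y)" using meq ty by blast
    have rv: "root_of_unity (\<alpha> v c1)" using roots vS c1H by blast
    have nz1: "\<sigma> (\<alpha> v c1) \<noteq> 0" using gal_nz[OF sg root_Qab[OF rv] root_nz[OF rv]] .
    have ry: "root_of_unity (\<alpha> (tau y) \<one>\<^bsub>G\<^esub>)" using roots ty oneH by blast
    have nz2: "zeta \<one>\<^bsub>G\<^esub> / \<alpha> (tau y) \<one>\<^bsub>G\<^esub> \<noteq> 0" using zeta_one root_nz[OF ry] by simp
    have "\<sigma> (\<alpha> v c1) * \<mu> y * (zeta \<one>\<^bsub>G\<^esub> / \<alpha> (tau y) \<one>\<^bsub>G\<^esub>) =
          \<sigma> (\<alpha> v c1) * \<mu>' y * (zeta \<one>\<^bsub>G\<^esub> / \<alpha> (tau y) \<one>\<^bsub>G\<^esub>)"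
    proof -
      have "\<sigma> (\<alpha> v c1) * \<mu> y * (zeta \<one>\<^bsub>G\<^esub> / \<alpha> (tau y) \<one>\<^bsub>G\<^esub>) =
          \<sigma> (\<alpha>' v c1) * \<mu>' y * (zeta \<one>\<^bsub>G\<^esub> / \<alpha>' (tau y) \<one>\<^bsub>G\<^esub>)"
        using eq0 eq1 m0 by simp
      then show ?thesis unfolding a1[symmetric] a2[symmetric] .
    qed
    then have "(\<sigma> (\<alpha> v c1) * (zeta \<one>\<^bsub>G\<^esub> / \<alpha> (tau y) \<one>\<^bsub>G\<^esub>)) * \<mu> y =
          (\<sigma> (\<alpha> v c1) * (zeta \<one>\<^bsub>G\<^esub> / \<alpha> (tau y) \<one>\<^bsub>G\<^esub>)) * \<mu>' y"
      by (simp only: mult_ac)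
    moreover have "\<sigma> (\<alpha> v c1) * (zeta \<one>\<^bsub>G\<^esub> / \<alpha> (tau y) \<one>\<^bsub>G\<^esub>) \<noteq> 0" using nz1 nz2 by simp
    ultimately show "\<mu> y = \<mu>' y" by simp
  qed
  have EX: "\<exists>d P \<alpha> d' P' \<alpha>'.
        assoc_proj Gh N \<theta> d P \<alpha> \<and> assoc_proj GHh M \<phi> d' P' \<alpha>' \<and>
        (\<forall>x\<in>stab Gh N \<theta>. \<forall>y\<in>stab Gh N \<theta>. root_of_unity (\<alpha> x y)) \<and>
        (\<forall>x\<in>stab GHh M \<phi>. \<forall>y\<in>stab GHh M \<phi>. root_of_unity (\<alpha>' x y)) \<and>
        (\<forall>x\<in>Hh \<inter> stab Gh N \<theta>. \<forall>y\<in>Hh \<inter> stab Gh N \<theta>. \<alpha> x y = \<alpha>' x y) \<and>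
        (\<forall>c\<in>centralizer_in Gh N. \<exists>\<zeta>. P c = \<zeta> \<cdot>\<^sub>m 1\<^sub>m d \<and> P' c = \<zeta> \<cdot>\<^sub>m 1\<^sub>m d') \<and>
        (\<forall>(x, \<sigma>)\<in>stab_pairs p Hh Gh N \<theta>. \<forall>\<mu> \<mu>'.
            is_mu Gh N \<theta> d P x \<sigma> \<mu> \<longrightarrow> is_mu GHh M \<phi> d' P' x \<sigma> \<mu>' \<longrightarrow>
            (\<forall>y\<in>Hh \<inter> stab Gh N \<theta>. \<mu> y = \<mu>' y))"
    by (intro exI[of _ d] exI[of _ Ph1] exI[of _ al1] exI[of _ d'] exI[of _ Ph2] exI[of _ al2] conjI A1 A2 R1 R2 E CC MU)
  show ?thesis unfolding geq_c_def
    by (intro conjI HTh sHh HTh' NHh_prod NHh C_Hh SPh EX)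
qed

end


theorem theorem2p9:
  fixes p :: nat and G Gh :: "'a monoid" and N M H Hh :: "'a set"
    and \<theta> \<phi> :: "'a \<Rightarrow> complex"
  assumes "prime p"
    and "group G" and "finite (carrier G)"
    and "geq_c p G N \<theta> H M \<phi>"
    and "group Gh" and "finite (carrier Gh)"
    and "N \<lhd> Gh"
    and "\<forall>a\<in>N. \<forall>b\<in>N. a \<otimes>\<^bsub>Gh\<^esub> b = a \<otimes>\<^bsub>G\<^esub> b"
    and "conj_image Gh N (carrier Gh) = conj_image G N (carrier G)"
    and "subgroup Hh Gh"
    and "M <#>\<^bsub>Gh\<^esub> centralizer_in Gh N \<subseteq> Hh"
    and "conj_image Gh N Hh = conj_image G N H"
  shows "geq_c p Gh N \<theta> Hh M \<phi>"
proof -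
  have g: "geq_c p G N \<theta> H M \<phi>" by fact
  then have HT: "H_triple p G N \<theta>" and sH: "subgroup H G" and HT': "H_triple p (G\<lparr>carrier := H\<rparr>) M \<phi>"
    and NH: "N <#>\<^bsub>G\<^esub> H = carrier G" and NHM: "N \<inter> H = M" and CH: "centralizer_in G N \<subseteq> H"
    and SP: "stab_pairs p H G N \<theta> = stab_pairs p H G M \<phi>"
    unfolding geq_c_def by blast+
  from g obtain d P \<alpha> d' P' \<alpha>' where
    AP: "assoc_proj G N \<theta> d P \<alpha>" and AP': "assoc_proj (G\<lparr>carrier := H\<rparr>) M \<phi> d' P' \<alpha>'"
    and roots: "\<forall>x\<in>stab G N \<theta>. \<forall>y\<in>stab G N \<theta>. root_of_unity (\<alpha> x y)"
    and roots': "\<forall>x\<in>stab (G\<lparr>carrier := H\<rparr>) M \<phi>. \<forall>y\<in>stab (G\<lparr>carrier := H\<rparr>) M \<phi>. root_of_unity (\<alpha>' x y)"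
    and aeq: "\<forall>x\<in>H \<inter> stab G N \<theta>. \<forall>y\<in>H \<inter> stab G N \<theta>. \<alpha> x y = \<alpha>' x y"
    and Ceq: "\<forall>c\<in>centralizer_in G N. \<exists>\<zeta>. P c = \<zeta> \<cdot>\<^sub>m 1\<^sub>m d \<and> P' c = \<zeta> \<cdot>\<^sub>m 1\<^sub>m d'"
    and mueq: "\<forall>(x, \<sigma>)\<in>stab_pairs p H G N \<theta>. \<forall>\<mu> \<mu>'.
            is_mu G N \<theta> d P x \<sigma> \<mu> \<longrightarrow> is_mu (G\<lparr>carrier := H\<rparr>) M \<phi> d' P' x \<sigma> \<mu>' \<longrightarrow>
            (\<forall>y\<in>H \<inter> stab G N \<theta>. \<mu> y = \<mu>' y)"
    unfolding geq_c_def by (elim conjE exE)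
  have "ctx G Gh p N M H Hh \<theta> \<phi> d P \<alpha> d' P' \<alpha>'"
    by (intro ctx.intro ctx_axioms.intro assms(2,3,5,7-12) HT sH HT' NH NHM CH SP AP AP' roots roots' aeq Ceq mueq)
  then show ?thesis by (rule ctx.main_result)
qed

end
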